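(* Assume the setting and Assumptions A1, A2, A3 of the context. Let $n=\ell k+r$ where $\ell,k>1$ are integers and $r\in\{0,1,\dots,k-1\}$. Then for every $\lambda\ge0$, \[ \mathbb E\Big[\exp\Big(\lambda\Big\|\frac1n\sum_{i=1}^nX_i\Big\|\Big)\Big]\le 2\exp\Big(\frac{B}{c^2}\big((\ell+1)\sigma^2+C_2\ell\,\Phi_{\mathcal C}(k)\big)\,\pi\Big(\frac{\lambda c}{\ell}\Big)+\lambda\tilde A_1\Phi_{\mathcal C}(k)\Big), \] where $\pi(x)=e^x-x-1$, $B=A_1^2+A_2$ and $\tilde A_1=C_1A_1$.
   Context: Let $(\mathcal B,\|\cdot\|)$ be a separable real Banach space with dual $\mathcal B^\star$ (dual norm $\|\cdot\|_\star$, duality pairing $\langle\cdot,\cdot\rangle$). For $r>0$ let $B(r)$ and $B^\star(r)$ denote the closed balls of radius $r$ centered at $0$ in $\mathcal B$ and $\mathcal B^\star$. Fix $c>0$ and put $\mathcal X=B(c)$. Let $(X_i)_{i\ge1}$ be a stochastic process on a probability space $(\Omega,\mathcal F,\mathbb P)$ with values in $\mathcal X$ which is centered ($\mathbb E X_i=0$ for all $i$, Bochner expectation). Let $\mathcal M_i=\sigma(X_1,\dots,X_i)$. $\mathcal C$-mixing: let $\mathcal C$ be a closed subspace of the Banach space of bounded real-valued functions on $\mathcal X$ (with the supremum norm), let $C(\cdot)$ be a seminorm on $\mathcal C$, and $\mathcal C_1=\{f\in\mathcal C: C(f)\le 1\}$. For integers $k\ge1$ the $\mathcal C$-mixing coefficients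 are $\Phi_{\mathcal C}(k)=\sup\{\|\mathbb E[\varphi(X_{i+k})\mid\mathcal M_i]-\mathbb E[\varphi(X_{i+k})]\|_{L_\infty(\mathbb P)}:\ \varphi\in\mathcal C_1,\ i\ge1\}$. Gâteaux derivatives: for $f:\mathcal B\to\mathbb R$, $x\in\mathcal B$, $v\in\mathcal B$, $\delta_v f(x)=\frac{d}{dt}\big|_{t=0}f(x+tv)$ when it exists; $\delta_{v,v}f(x)=\frac{d^2}{dt^2}\big|_{t=0}f(x+tv)$ denotes the second Gâteaux differential in direction $v$. Assumption A1: the norm $x\mapsto\|x\|$ is twice Gâteaux differentiable at every nonzero $x$ in all directions, and there are constants $A_1\ge1$, $A_2>0$ with $|\delta_v(\|x\|)|\le A_1\|v\|$ and $|\delta_{v,v}(\|x\|)|\le A_2\|v\|^2/\|x\|$ for all $x,v\in\mathcal B$, $x\ne0$. Assumption A2: there are constants $c,\sigma^2>0$ with $\|X_i\|\le c$ a.s. and $\mathbb E\|X_i\|^2\le\sigma^2$ for all $i$. Assumption A3: for each $s\in\mathcal B^\star$ the function $h_{1,s}(x)=\langle s,x\rangle$ (restricted to $\mathcal X$) belongs to $\mathcal C$, the function $h_2(x)=\|x\|^2$ belongs to $\mathcal C$, and $\sup_{s\in B^\star(1)}C(h_{1,s})\le C_1$, $C(h_2)\le C_2$ for constants $C_1,C_2\ge0$. *)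

theory Defs
  imports "HOL-Analysis.Analysis" "HOL-Probability.Probability"
begin

text \<open>Restriction of a function on the Banach space to the ball X = B(c);
  functions on X are represented as functions on the whole space vanishing outside X.\<close>
definition restrX :: "real \<Rightarrow> ('b::real_normed_vector \<Rightarrow> real) \<Rightarrow> 'b \<Rightarrow> real" where
  "restrX c f = (\<lambda>x. if norm x \<le> c then f x else 0)"

definition C_class :: "real \<Rightarrow> ('b::real_normed_vector \<Rightarrow> real) set \<Rightarrow> (('b \<Rightarrow> real) \<Rightarrow> real) \<Rightarrow> bool" where
  "C_class c C Cn \<longleftrightarrow>
     (\<forall>f\<in>C. (\<forall>x. c < norm x \<longrightarrow> f x = 0) \<and> bounded (f ` cball 0 c) \<and> f \<in> borel_measurable borel)
   \<and> (\<lambda>x. 0) \<in> C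
   \<and> (\<forall>f\<in>C. \<forall>g\<in>C. (\<lambda>x. f x + g x) \<in> C)
   \<and> (\<forall>f\<in>C. \<forall>a::real. (\<lambda>x. a * f x) \<in> C)
   \<and> (\<forall>F f. (\<forall>n. F n \<in> C) \<and> (\<forall>x. c < norm x \<longrightarrow> f x = 0)
            \<and> uniform_limit (cball 0 c) F f sequentially \<longrightarrow> f \<in> C)
   \<and> (\<forall>f\<in>C. 0 \<le> Cn f)
   \<and> (\<forall>f\<in>C. \<forall>a::real. Cn (\<lambda>x. a * f x) = \<bar>a\<bar> * Cn f)
   \<and> (\<forall>f\<in>C. \<forall>g\<in>C. Cn (\<lambda>x. f x + g x) \<le> Cn f + Cn g)"

definition nat_filt :: "'a measure \<Rightarrow> (nat \<Rightarrow> 'a \<Rightarrow> 'b::topological_space) \<Rightarrow> nat \<Rightarrow> 'a measure" where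
  "nat_filt M X i = sigma (space M) (\<Union>j\<in>{1..i}. {X j -` A \<inter> space M | A. A \<in> sets borel})"

definition C_mixing_coeff :: "'a measure \<Rightarrow> (nat \<Rightarrow> 'a \<Rightarrow> 'b::topological_space) \<Rightarrow> ('b \<Rightarrow> real) set
    \<Rightarrow> (('b \<Rightarrow> real) \<Rightarrow> real) \<Rightarrow> nat \<Rightarrow> ereal" where
  "C_mixing_coeff M X C Cn k =
     (SUP p \<in> {(\<phi>, i). \<phi> \<in> C \<and> Cn \<phi> \<le> 1 \<and> 1 \<le> i}.
        esssup M (\<lambda>\<omega>. ereal \<bar>real_cond_exp M (nat_filt M X (snd p)) (\<lambda>\<omega>. fst p (X (snd p + k) \<omega>)) \<omega>
                          - (\<integral>\<omega>'. fst p (X (snd p + k) \<omega>') \<partial>M)\<bar>))"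

definition gateaux_line :: "('b::real_normed_vector \<Rightarrow> real) \<Rightarrow> 'b \<Rightarrow> 'b \<Rightarrow> real \<Rightarrow> real" where
  "gateaux_line f x v = (\<lambda>t. f (x + t *\<^sub>R v))"

definition pi_fun :: "real \<Rightarrow> real" where
  "pi_fun x = exp x - x - 1"

end

theory Submission
  imports Defs
begin

lemma cmp_lemma:
  fixes g g1 g2 h h1 h2 :: "real \<Rightarrow> real"
  assumes "\<And>t. 0 \<le> t \<Longrightarrow> t \<le> 1 \<Longrightarrow> (g has_real_derivative g1 t) (at t)"
    and "\<And>t. 0 \<le> t \<Longrightarrow> t \<le> 1 \<Longrightarrow> (g1 has_real_derivative g2 t) (at t)"
    and "\<And>t. 0 \<le> t \<Longrightarrow> t \<le> 1 \<Longrightarrow> (h has_real_derivative h1 t) (at t)"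
    and "\<And>t. 0 \<le> t \<Longrightarrow> t \<le> 1 \<Longrightarrow> (h1 has_real_derivative h2 t) (at t)"
    and "\<And>t. 0 \<le> t \<Longrightarrow> t \<le> 1 \<Longrightarrow> g2 t \<le> h2 t"
    and "g 0 = h 0" and "g1 0 = h1 0"
  shows "g 1 \<le> h 1"
proof -
  have d1: "0 \<le> h1 t - g1 t" if t: "0 \<le> t" "t \<le> 1" for t
  proof -
    have "(\<lambda>s. h1 s - g1 s) 0 \<le> (\<lambda>s. h1 s - g1 s) t"
    proof (rule DERIV_nonneg_imp_nondecreasing[OF t(1)])
      fix x assume x: "0 \<le> x" "x \<le> t"
      show "\<exists>y. ((\<lambda>s. h1 s - g1 s) has_real_derivative y) (at x) \<and> 0 \<le> y"
        using assms(2,4,5)[of x] x t by (intro exI[of _ "h2 x - g2 x"] conjI DERIV_diff) auto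
    qed
    thus ?thesis using assms by simp
  qed
  have "(\<lambda>s. h s - g s) 0 \<le> (\<lambda>s. h s - g s) 1"
  proof (rule DERIV_nonneg_imp_nondecreasing[of 0 1])
    fix x :: real assume x: "0 \<le> x" "x \<le> 1"
    show "\<exists>y. ((\<lambda>s. h s - g s) has_real_derivative y) (at x) \<and> 0 \<le> y"
      using assms(1,3)[of x] d1[of x] x by (intro exI[of _ "h1 x - g1 x"] conjI DERIV_diff) auto
  qed simp
  thus ?thesis using assms by simp
qed

lemma sinh_le_mult_cosh: "0 \<le> (a::real) \<Longrightarrow> sinh a \<le> a * cosh a"
proof -
  assume a: "0 \<le> a"
  have "(\<lambda>s. s * cosh s - sinh s) 0 \<le> (\<lambda>s. s * cosh s - sinh s) a"
  proof (rule DERIV_nonneg_imp_nondecreasing[OF a])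
    fix x :: real assume x: "0 \<le> x" "x \<le> a"
    have "((\<lambda>s. s * cosh s - sinh s) has_real_derivative (1 * cosh x + x * sinh x - cosh x)) (at x)"
      by (auto intro!: derivative_eq_intros)
    moreover have "0 \<le> x * sinh x" using x by (simp add: sinh_real_nonneg_iff)
    ultimately show "\<exists>y. ((\<lambda>s. s * cosh s - sinh s) has_real_derivative y) (at x) \<and> 0 \<le> y" by force
  qed
  thus ?thesis by simp
qed

lemma cosh_add_le: "0 \<le> (b::real) \<Longrightarrow> cosh (a + b) \<le> cosh a * exp b"
proof -
  assume b: "0 \<le> b"
  have e1: "exp (-(a+b)) \<le> exp (-a + b)" using b by simp
  have e2: "exp (-a + b) = exp (-a) * exp b" by (rule exp_add)
  have e3: "exp (a + b) = exp a * exp b" by (rule exp_add)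
  have "cosh (a + b) = (exp (a + b) + exp (-(a+b))) / 2" by (simp add: cosh_def)
  also have "\<dots> \<le> (exp a * exp b + exp (-a) * exp b) / 2" unfolding e3 e2[symmetric] by (intro divide_right_mono add_left_mono e1) simp
  also have "\<dots> = cosh a * exp b" by (simp add: cosh_def algebra_simps)
  finally show ?thesis .
qed

lemma cosh_mono_nonneg: "0 \<le> (a::real) \<Longrightarrow> a \<le> b \<Longrightarrow> cosh a \<le> cosh b"
  using cosh_real_nonneg_le_iff by auto

lemma aux_h1: "0 \<le> (z::real) \<Longrightarrow> 0 \<le> (z - 1) * exp z + 1"
proof -
  assume z: "0 \<le> z"
  have "(\<lambda>s. (s - 1) * exp s + 1) 0 \<le> (\<lambda>s. (s - 1) * exp s + 1) z"
  proof (rule DERIV_nonneg_imp_nondecreasing[OF z])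
    fix x :: real assume x: "0 \<le> x" "x \<le> z"
    have "((\<lambda>s. (s - 1) * exp s + 1) has_real_derivative (1 * exp x + (x - 1) * exp x + 0)) (at x)"
      by (auto intro!: derivative_eq_intros)
    moreover have "1 * exp x + (x - 1) * exp x + 0 = x * exp x" by (simp add: algebra_simps)
    moreover have "0 \<le> x * exp x" using x by simp
    ultimately show "\<exists>y. ((\<lambda>s. (s - 1) * exp s + 1) has_real_derivative y) (at x) \<and> 0 \<le> y" by metis
  qed
  thus ?thesis by simp
qed

lemma aux_h0: "0 \<le> (z::real) \<Longrightarrow> 0 \<le> (z - 2) * exp z + z + 2"
proof -
  assume z: "0 \<le> z"
  have "(\<lambda>s. (s - 2) * exp s + s + 2) 0 \<le> (\<lambda>s. (s - 2) * exp s + s + 2) z"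
  proof (rule DERIV_nonneg_imp_nondecreasing[OF z])
    fix x :: real assume x: "0 \<le> x" "x \<le> z"
    have "((\<lambda>s. (s - 2) * exp s + s + 2) has_real_derivative (1 * exp x + (x - 2) * exp x + 1 + 0)) (at x)"
      by (auto intro!: derivative_eq_intros)
    moreover have "1 * exp x + (x - 2) * exp x + 1 + 0 = (x - 1) * exp x + 1" by (simp add: algebra_simps)
    moreover have "0 \<le> (x - 1) * exp x + 1" using x aux_h1 by simp
    ultimately show "\<exists>y. ((\<lambda>s. (s - 2) * exp s + s + 2) has_real_derivative y) (at x) \<and> 0 \<le> y" by metis
  qed
  thus ?thesis by simp
qed

lemma pi_fun_scale:
  assumes "0 \<le> (a::real)" "a \<le> b"
  shows "pi_fun a * b\<^sup>2 \<le> pi_fun b * a\<^sup>2"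
proof (cases "a = 0")
  case True thus ?thesis by (simp add: pi_fun_def)
next
  case False
  hence a: "0 < a" using assms by simp
  have "(\<lambda>s. pi_fun s / s\<^sup>2) a \<le> (\<lambda>s. pi_fun s / s\<^sup>2) b"
  proof (rule DERIV_nonneg_imp_nondecreasing[OF assms(2)])
    fix x :: real assume x: "a \<le> x" "x \<le> b"
    hence xp: "0 < x" using a by simp
    have "((\<lambda>s. pi_fun s / s\<^sup>2) has_real_derivative
        (((exp x - 1 - 0) * x\<^sup>2 - pi_fun x * (2 * x)) / (x\<^sup>2)\<^sup>2)) (at x)"
      unfolding pi_fun_def using xp
      by (auto intro!: derivative_eq_intros simp: power2_eq_square)
    moreover have "((exp x - 1 - 0) * x\<^sup>2 - pi_fun x * (2 * x)) / (x\<^sup>2)\<^sup>2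
        = ((x - 2) * exp x + x + 2) / x^3"
      using xp by (simp add: pi_fun_def field_simps power2_eq_square power3_eq_cube)
    moreover have "0 \<le> ((x - 2) * exp x + x + 2) / x^3"
      using xp aux_h0[of x] by simp
    ultimately show "\<exists>y. ((\<lambda>s. pi_fun s / s\<^sup>2) has_real_derivative y) (at x) \<and> 0 \<le> y" by metis
  qed
  hence "pi_fun a / a\<^sup>2 \<le> pi_fun b / b\<^sup>2" by simp
  moreover have "0 < b" using a assms by simp
  ultimately show ?thesis using a by (simp add: field_simps)
qed

lemma pi_fun_nonneg: "0 \<le> pi_fun (x::real)"
  unfolding pi_fun_def using exp_ge_add_one_self[of x] by linarith

definition Lf :: "'b::real_normed_vector \<Rightarrow> 'b \<Rightarrow> real" where
  "Lf x v = (SOME D. (gateaux_line norm x v has_real_derivative D) (at 0))"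

lemma Lf_deriv:
  fixes A\<^sub>1 A\<^sub>2 :: real
  assumes A1: "\<And>(x::'b::real_normed_vector) v. x \<noteq> 0 \<Longrightarrow>
        (\<exists>D. (gateaux_line norm x v has_real_derivative D) (at 0) \<and> \<bar>D\<bar> \<le> A\<^sub>1 * norm v)
      \<and> (\<exists>D2. ((\<lambda>t. deriv (gateaux_line norm x v) t) has_real_derivative D2) (at 0)
              \<and> \<bar>D2\<bar> \<le> A\<^sub>2 * (norm v)\<^sup>2 / norm x)"
    and x: "(x::'b) \<noteq> 0"
  shows "(gateaux_line norm x v has_real_derivative Lf x v) (at 0)" "\<bar>Lf x v\<bar> \<le> A\<^sub>1 * norm v"
proof -
  obtain D where D: "(gateaux_line norm x v has_real_derivative D) (at 0)" "\<bar>D\<bar> \<le> A\<^sub>1 * norm v"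
    using A1[OF x, of v] by blast
  have "Lf x v = D" unfolding Lf_def using D(1) by (metis (mono_tags) DERIV_unique someI_ex)
  thus "(gateaux_line norm x v has_real_derivative Lf x v) (at 0)" "\<bar>Lf x v\<bar> \<le> A\<^sub>1 * norm v"
    using D by auto
qed

lemma Lf_unique:
  assumes "(gateaux_line norm x v has_real_derivative D) (at 0)"
  shows "Lf x v = D"
  unfolding Lf_def using assms by (metis (mono_tags) DERIV_unique someI_ex)

lemma Lf_linear:
  fixes A\<^sub>1 A\<^sub>2 :: real
  assumes A1: "\<And>(x::'b::real_normed_vector) v. x \<noteq> 0 \<Longrightarrow>
        (\<exists>D. (gateaux_line norm x v has_real_derivative D) (at 0) \<and> \<bar>D\<bar> \<le> A\<^sub>1 * norm v)
      \<and> (\<exists>D2. ((\<lambda>t. deriv (gateaux_line norm x v) t) has_real_derivative D2) (at 0)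
              \<and> \<bar>D2\<bar> \<le> A\<^sub>2 * (norm v)\<^sup>2 / norm x)"
    and x: "(x::'b) \<noteq> 0"
  shows "bounded_linear (Lf x)"
proof -
  note dv = Lf_deriv(1)[OF A1 x]
  have sc: "Lf x (a *\<^sub>R v) = a * Lf x v" for a v
  proof -
    have eq: "gateaux_line norm x (a *\<^sub>R v) = (\<lambda>t. gateaux_line norm x v (a * t))"
      by (simp add: gateaux_line_def fun_eq_iff mult.commute)
    have "((\<lambda>t. gateaux_line norm x v (a * t)) has_real_derivative Lf x v * a) (at 0)"
      using DERIV_chain2[of "gateaux_line norm x v" "Lf x v" "\<lambda>t. a * t" 0 a] dv[of v]
      by (auto intro!: derivative_eq_intros)
    thus ?thesis using Lf_unique[of x "a *\<^sub>R v"] eq by (simp add: mult.commute)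
  qed
  have ad: "Lf x (u + v) = Lf x u + Lf x v" for u v
  proof -
    define q where "q = (\<lambda>t. (1/2) * gateaux_line norm x u (2 * t) + (1/2) * gateaux_line norm x v (2 * t)
        - gateaux_line norm x (u + v) t)"
    have c1: "((\<lambda>t. gateaux_line norm x u (2 * t)) has_real_derivative Lf x u * 2) (at 0)"
      using DERIV_chain2[of "gateaux_line norm x u" "Lf x u" "\<lambda>t. 2 * t" 0 2] dv[of u]
      by (auto intro!: derivative_eq_intros)
    have c2: "((\<lambda>t. gateaux_line norm x v (2 * t)) has_real_derivative Lf x v * 2) (at 0)"
      using DERIV_chain2[of "gateaux_line norm x v" "Lf x v" "\<lambda>t. 2 * t" 0 2] dv[of v]
      by (auto intro!: derivative_eq_intros)
    have "(q has_real_derivative ((1/2) * (Lf x u * 2) + (1/2) * (Lf x v * 2) - Lf x (u + v))) (at 0)"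
      unfolding q_def by (intro DERIV_diff DERIV_add DERIV_cmult c1 c2 dv)
    moreover have "\<forall>y. \<bar>0 - y\<bar> < 1 \<longrightarrow> q 0 \<le> q y"
    proof (intro allI impI)
      fix t :: real
      have hx: "(1/2::real) *\<^sub>R x + (1/2) *\<^sub>R x = x"
        by (subst scaleR_add_left[symmetric]) simp
      have "(1/2) *\<^sub>R (x + (2 * t) *\<^sub>R u) + (1/2) *\<^sub>R (x + (2 * t) *\<^sub>R v)
          = ((1/2::real) *\<^sub>R x + (1/2) *\<^sub>R x) + (t *\<^sub>R u + t *\<^sub>R v)"
        by (simp add: scaleR_add_right)
      also have "\<dots> = x + t *\<^sub>R (u + v)" by (simp only: hx scaleR_add_right)
      finally have "x + t *\<^sub>R (u + v) = (1/2) *\<^sub>R (x + (2 * t) *\<^sub>R u) + (1/2) *\<^sub>R (x + (2 * t) *\<^sub>R v)"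
        by simp
      hence "norm (x + t *\<^sub>R (u + v)) \<le> (1/2) * norm (x + (2 * t) *\<^sub>R u) + (1/2) * norm (x + (2 * t) *\<^sub>R v)"
        using norm_triangle_ineq[of "(1/2::real) *\<^sub>R (x + (2 * t) *\<^sub>R u)" "(1/2::real) *\<^sub>R (x + (2 * t) *\<^sub>R v)"]
        by (simp only: norm_scaleR)
      thus "q 0 \<le> q t" by (simp add: q_def gateaux_line_def)
    qed
    ultimately have "(1/2) * (Lf x u * 2) + (1/2) * (Lf x v * 2) - Lf x (u + v) = 0"
      by (metis DERIV_local_min zero_less_one)
    thus ?thesis by simp
  qed
  show ?thesis
  proof (rule bounded_linear_intro[where K = A\<^sub>1])
    show "Lf x (u + v) = Lf x u + Lf x v" for u v by (rule ad)
    show "Lf x (r *\<^sub>R v) = r *\<^sub>R Lf x v" for r v using sc by simp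
    show "norm (Lf x v) \<le> norm v * A\<^sub>1" for v using Lf_deriv(2)[OF A1 x, of v] by (simp add: mult.commute)
  qed
qed

lemma cosh_abs_real: "cosh \<bar>z::real\<bar> = cosh z"
  by (cases "z \<ge> 0") auto

lemma deriv_shift_eq: "deriv (\<lambda>s. f (s + t)) s = deriv (f :: real \<Rightarrow> real) (s + t)"
  unfolding deriv_def using DERIV_shift[of f _ s t] by simp

lemma pointwise_ineq:
  fixes A\<^sub>1 A\<^sub>2 mu :: real and x y :: "'b::real_normed_vector"
  assumes A1: "\<And>(x::'b) v. x \<noteq> 0 \<Longrightarrow>
        (\<exists>D. (gateaux_line norm x v has_real_derivative D) (at 0) \<and> \<bar>D\<bar> \<le> A\<^sub>1 * norm v)
      \<and> (\<exists>D2. ((\<lambda>t. deriv (gateaux_line norm x v) t) has_real_derivative D2) (at 0)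
              \<and> \<bar>D2\<bar> \<le> A\<^sub>2 * (norm v)\<^sup>2 / norm x)"
    and A1_ge: "1 \<le> A\<^sub>1" and A2_pos: "0 \<le> A\<^sub>2" and mu: "0 \<le> mu"
  shows "cosh (mu * norm (x + y)) \<le> cosh (mu * norm x) + mu * sinh (mu * norm x) * (if x = 0 then 0 else Lf x y)
           + (A\<^sub>1\<^sup>2 + A\<^sub>2) * cosh (mu * norm x) * pi_fun (mu * norm y)"
proof -
  define B where "B = A\<^sub>1\<^sup>2 + A\<^sub>2"
  have B1: "1 \<le> B" unfolding B_def using A1_ge A2_pos
    by (smt (verit) one_le_power)
  define Dx where "Dx = (if x = 0 then 0 else Lf x y)"
  define ny where "ny = norm y"
  define ch where "ch = cosh (mu * norm x)"
  define sh where "sh = sinh (mu * norm x)"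
  define h where "h = (\<lambda>t. ch + mu * sh * Dx * t + B * ch * (exp (t * (mu * ny)) - t * (mu * ny) - 1))"
  define h1 where "h1 = (\<lambda>t. mu * sh * Dx + B * ch * (exp (t * (mu * ny)) * (mu * ny) - mu * ny))"
  define h2 where "h2 = (\<lambda>t. B * ch * (exp (t * (mu * ny)) * (mu * ny) * (mu * ny)))"
  have dh: "(h has_real_derivative h1 t) (at t)" for t
    unfolding h_def h1_def by (auto intro!: derivative_eq_intros simp: algebra_simps)
  have dh1: "(h1 has_real_derivative h2 t) (at t)" for t
    unfolding h1_def h2_def by (auto intro!: derivative_eq_intros simp: algebra_simps)
  have h0: "h 0 = ch" by (simp add: h_def)
  have h10: "h1 0 = mu * sh * Dx" by (simp add: h1_def)
  have h1v: "h 1 = cosh (mu * norm x) + mu * sinh (mu * norm x) * Dx + B * cosh (mu * norm x) * pi_fun (mu * norm y)"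
    by (simp add: h_def pi_fun_def ch_def sh_def ny_def)
  have chpos: "0 \<le> ch" by (simp add: ch_def)
  have cb: "cosh (mu * norm (x + t *\<^sub>R y)) \<le> ch * exp (t * (mu * ny))" if t: "0 \<le> t" for t
  proof -
    have "norm (x + t *\<^sub>R y) \<le> norm x + t * ny"
      using norm_triangle_ineq[of x "t *\<^sub>R y"] t by (simp add: ny_def)
    hence "mu * norm (x + t *\<^sub>R y) \<le> mu * (norm x + t * ny)"
      using mu by (intro mult_left_mono) auto
    hence "mu * norm (x + t *\<^sub>R y) \<le> mu * norm x + t * (mu * ny)"
      by (simp add: algebra_simps)
    hence "cosh (mu * norm (x + t *\<^sub>R y)) \<le> cosh (mu * norm x + t * (mu * ny))"
      by (intro cosh_mono_nonneg) (use mu in simp)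
    also have "\<dots> \<le> ch * exp (t * (mu * ny))" unfolding ch_def
      by (rule cosh_add_le) (use mu t in \<open>simp add: ny_def\<close>)
    finally show ?thesis .
  qed
  have key: "cosh (mu * norm (x + y)) \<le> h 1"
  proof (cases "\<exists>t0. x + t0 *\<^sub>R y = 0")
    case True
    then obtain t0 where t0: "x + t0 *\<^sub>R y = 0" by blast
    show ?thesis
    proof (cases "y = 0")
      case True
      hence "x = 0" using t0 by simp
      thus ?thesis using True by (simp add: h_def ch_def sh_def Dx_def ny_def)
    next
      case ynz: False
      have xe: "x = - t0 *\<^sub>R y" using t0 by (simp add: eq_neg_iff_add_eq_0)
      have gform: "cosh (mu * norm (x + t *\<^sub>R y)) = cosh (mu * ny * (t - t0))" for t
      proof -
        have "x + t *\<^sub>R y = (t - t0) *\<^sub>R y" by (simp add: xe algebra_simps)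
        hence "mu * norm (x + t *\<^sub>R y) = \<bar>mu * ny * (t - t0)\<bar>"
          using mu by (simp add: ny_def abs_mult)
        thus ?thesis by (simp add: cosh_abs_real)
      qed
      define g where "g = (\<lambda>t. cosh (mu * ny * (t - t0)))"
      define g1 where "g1 = (\<lambda>t. sinh (mu * ny * (t - t0)) * (mu * ny))"
      define g2 where "g2 = (\<lambda>t. cosh (mu * ny * (t - t0)) * (mu * ny) * (mu * ny))"
      have dg: "(g has_real_derivative g1 t) (at t)" for t
        unfolding g_def g1_def by (auto intro!: derivative_eq_intros)
      have dg1: "(g1 has_real_derivative g2 t) (at t)" for t
        unfolding g1_def g2_def by (auto intro!: derivative_eq_intros)
      have g10: "g1 0 = mu * sh * Dx"
      proof (cases "x = 0")
        case True
        hence "t0 = 0" using xe ynz by simp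
        thus ?thesis using True by (simp add: g1_def sh_def)
      next
        case False
        have d: "((\<lambda>t. cosh (mu * gateaux_line norm x y t)) has_real_derivative
                  sinh (mu * gateaux_line norm x y 0) * (mu * Lf x y)) (at 0)"
          using Lf_deriv(1)[OF A1 False, of y] by (auto intro!: derivative_eq_intros)
        have "(\<lambda>t. cosh (mu * gateaux_line norm x y t)) = g"
          by (simp add: fun_eq_iff g_def gateaux_line_def gform)
        hence "g1 0 = sinh (mu * gateaux_line norm x y 0) * (mu * Lf x y)"
          using d dg[of 0] DERIV_unique by metis
        thus ?thesis using False by (simp add: Dx_def sh_def gateaux_line_def)
      qed
      have "g 1 \<le> h 1"
      proof (rule cmp_lemma[of g g1 g2 h h1 h2])
        fix t :: real assume t: "0 \<le> t" "t \<le> 1"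
        have "g2 t = (mu * ny) * (mu * ny) * cosh (mu * norm (x + t *\<^sub>R y))"
          by (simp add: g2_def gform)
        also have "\<dots> \<le> (mu * ny) * (mu * ny) * (ch * exp (t * (mu * ny)))"
          by (intro mult_left_mono cb t) simp
        also have "\<dots> \<le> B * ((mu * ny) * (mu * ny) * (ch * exp (t * (mu * ny))))"
          using mult_right_mono[OF B1, of "(mu * ny) * (mu * ny) * (ch * exp (t * (mu * ny)))"] chpos by simp
        also have "\<dots> = h2 t" by (simp add: h2_def algebra_simps)
        finally show "g2 t \<le> h2 t" .
      qed (use dg dg1 dh dh1 g10 h10 h0 in \<open>auto simp: g_def ch_def gform[of 0, simplified]\<close>)
      moreover have "cosh (mu * norm (x + y)) = g 1" using gform[of 1] unfolding g_def by (simp only: scaleR_one)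
      ultimately show ?thesis by simp
    qed
  next
    case False
    hence nz: "x + t *\<^sub>R y \<noteq> 0" for t by blast
    define N where "N = (\<lambda>t. norm (x + t *\<^sub>R y))"
    have Npos: "0 < N t" for t using nz[of t] by (simp add: N_def)
    have ND: "(N has_real_derivative deriv N t) (at t) \<and> \<bar>deriv N t\<bar> \<le> A\<^sub>1 * ny
        \<and> (deriv N has_real_derivative deriv (deriv N) t) (at t)
        \<and> \<bar>deriv (deriv N) t\<bar> \<le> A\<^sub>2 * ny\<^sup>2 / N t" for t
    proof -
      define z where "z = x + t *\<^sub>R y"
      have gl: "gateaux_line norm z y = (\<lambda>s. N (s + t))"
        by (simp add: fun_eq_iff gateaux_line_def N_def z_def algebra_simps)
      obtain D1 where D1: "((\<lambda>s. N (s + t)) has_real_derivative D1) (at 0)" "\<bar>D1\<bar> \<le> A\<^sub>1 * ny"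
        using A1[OF nz[of t], of y] gl by (auto simp: z_def ny_def)
      obtain D2 where D2: "((\<lambda>s. deriv (\<lambda>s. N (s + t)) s) has_real_derivative D2) (at 0)"
          "\<bar>D2\<bar> \<le> A\<^sub>2 * ny\<^sup>2 / N t"
        using A1[OF nz[of t], of y] gl by (auto simp: z_def ny_def N_def)
      have dN: "(N has_real_derivative D1) (at t)"
        using D1(1) DERIV_shift[of N D1 0 t] by simp
      have "((\<lambda>s. deriv N (s + t)) has_real_derivative D2) (at 0)"
        using D2(1) by (simp add: deriv_shift_eq)
      hence dN1: "(deriv N has_real_derivative D2) (at t)"
        using DERIV_shift[of "deriv N" D2 0 t] by simp
      show ?thesis using dN dN1 D1(2) D2(2) DERIV_imp_deriv[OF dN] DERIV_imp_deriv[OF dN1] by simp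
    qed
    define g where "g = (\<lambda>t. cosh (mu * N t))"
    define g1 where "g1 = (\<lambda>t. sinh (mu * N t) * (mu * deriv N t))"
    define g2 where "g2 = (\<lambda>t. cosh (mu * N t) * (mu * deriv N t) * (mu * deriv N t)
                               + sinh (mu * N t) * (mu * deriv (deriv N) t))"
    have dg: "(g has_real_derivative g1 t) (at t)" for t
      unfolding g_def g1_def using ND[of t] by (auto intro!: derivative_eq_intros)
    have dg1: "(g1 has_real_derivative g2 t) (at t)" for t
      unfolding g1_def g2_def using ND[of t] by (auto intro!: derivative_eq_intros simp: algebra_simps)
    have x0: "x \<noteq> 0" using nz[of 0] by simp
    have Nx: "N = gateaux_line norm x y" by (simp add: fun_eq_iff N_def gateaux_line_def)
    have dN0: "deriv N 0 = Lf x y"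
      using DERIV_imp_deriv[OF Lf_deriv(1)[OF A1 x0, of y]] Nx by simp
    have g10: "g1 0 = mu * sh * Dx"
      using dN0 x0 by (simp add: g1_def Dx_def sh_def N_def)
    have "g 1 \<le> h 1"
    proof (rule cmp_lemma[of g g1 g2 h h1 h2])
      fix t :: real assume t: "0 \<le> t" "t \<le> 1"
      define a where "a = deriv N t"
      define b where "b = deriv (deriv N) t"
      have ab: "\<bar>a\<bar> \<le> A\<^sub>1 * ny" "\<bar>b\<bar> \<le> A\<^sub>2 * ny\<^sup>2 / N t" using ND[of t] by (auto simp: a_def b_def)
      have cpos: "0 \<le> cosh (mu * N t)" by simp
      have spos: "0 \<le> sinh (mu * N t)" using mu Npos[of t] by simp
      have "a * a \<le> (A\<^sub>1 * ny) * (A\<^sub>1 * ny)"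
        using ab(1) by (metis abs_ge_zero abs_mult_self_eq mult_mono order.trans)
      hence "a * a * (mu * mu * cosh (mu * N t)) \<le> (A\<^sub>1 * ny) * (A\<^sub>1 * ny) * (mu * mu * cosh (mu * N t))"
        using cpos by (intro mult_right_mono) auto
      hence t1: "cosh (mu * N t) * (mu * a) * (mu * a) \<le> cosh (mu * N t) * mu\<^sup>2 * (A\<^sub>1\<^sup>2 * ny\<^sup>2)"
        by (simp add: power2_eq_square algebra_simps)
      have "sinh (mu * N t) * (mu * b) \<le> sinh (mu * N t) * (mu * \<bar>b\<bar>)"
        using spos mu by (intro mult_left_mono) (auto simp: mult_left_mono)
      also have "\<dots> \<le> sinh (mu * N t) * (mu * (A\<^sub>2 * ny\<^sup>2 / N t))"
        using spos mu ab(2) by (intro mult_left_mono) auto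
      also have "\<dots> \<le> (mu * N t * cosh (mu * N t)) * (mu * (A\<^sub>2 * ny\<^sup>2 / N t))"
        using sinh_le_mult_cosh[of "mu * N t"] mu Npos[of t] A2_pos
        by (intro mult_right_mono) auto
      also have "\<dots> = cosh (mu * N t) * mu\<^sup>2 * (A\<^sub>2 * ny\<^sup>2)"
        using Npos[of t] by (simp add: field_simps power2_eq_square)
      finally have t2: "sinh (mu * N t) * (mu * b) \<le> cosh (mu * N t) * mu\<^sup>2 * (A\<^sub>2 * ny\<^sup>2)" .
      have "g2 t = cosh (mu * N t) * (mu * a) * (mu * a) + sinh (mu * N t) * (mu * b)"
        by (simp add: g2_def a_def b_def)
      also have "\<dots> \<le> cosh (mu * N t) * mu\<^sup>2 * (A\<^sub>1\<^sup>2 * ny\<^sup>2) + cosh (mu * N t) * mu\<^sup>2 * (A\<^sub>2 * ny\<^sup>2)"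
        using t1 t2 by linarith
      also have "\<dots> = cosh (mu * N t) * mu\<^sup>2 * (B * ny\<^sup>2)"
        by (simp add: B_def algebra_simps)
      finally have "g2 t \<le> cosh (mu * N t) * mu\<^sup>2 * (B * ny\<^sup>2)" .
      also have "\<dots> \<le> (ch * exp (t * (mu * ny))) * mu\<^sup>2 * (B * ny\<^sup>2)"
        using cb[OF t(1)] B1 by (intro mult_right_mono) (auto simp: N_def)
      also have "\<dots> = h2 t" by (simp add: h2_def power2_eq_square algebra_simps)
      finally show "g2 t \<le> h2 t" .
    qed (use dg dg1 dh dh1 g10 h10 h0 in \<open>auto simp: g_def ch_def N_def\<close>)
    thus ?thesis by (simp add: g_def N_def)
  qed
  thus ?thesis using h1v by (simp add: Dx_def B_def)
qed

lemma (in prob_space) bnd_integrable: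
  fixes f :: "'a \<Rightarrow> real"
  assumes "f \<in> borel_measurable M" "\<And>\<omega>. \<omega> \<in> space M \<Longrightarrow> \<bar>f \<omega>\<bar> \<le> Bd"
  shows "integrable M f"
  using assms by (intro integrable_const_bound[where B=Bd]) auto

lemma sum_decomp_bound:
  fixes M F :: "'a measure" and jf :: "'a \<Rightarrow> nat" and Gs :: "'a \<Rightarrow> real"
    and Y :: "'a \<Rightarrow> 'b::{banach, second_countable_topology}" and s :: "nat \<Rightarrow> 'b \<Rightarrow>\<^sub>L real"
  assumes M: "prob_space M" and sub: "subalgebra M F"
    and jf[measurable]: "jf \<in> measurable F (count_space UNIV)"
    and Gs[measurable]: "Gs \<in> borel_measurable F"
    and Gs0: "\<And>\<omega>. \<omega> \<in> space M \<Longrightarrow> 0 \<le> Gs \<omega>" and GsB: "\<And>\<omega>. \<omega> \<in> space M \<Longrightarrow> Gs \<omega> \<le> Bg"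
    and Y[measurable]: "Y \<in> borel_measurable M" and Yc: "\<And>\<omega>. \<omega> \<in> space M \<Longrightarrow> norm (Y \<omega>) \<le> c"
    and sA: "\<And>j. norm (s j) \<le> A" and D: "0 \<le> D"
    and H1: "\<And>G Bd s. G \<in> borel_measurable F \<Longrightarrow> (\<And>\<omega>. \<omega> \<in> space M \<Longrightarrow> 0 \<le> G \<omega>)
        \<Longrightarrow> (\<And>\<omega>. \<omega> \<in> space M \<Longrightarrow> G \<omega> \<le> Bd)
        \<Longrightarrow> (\<integral>\<omega>. G \<omega> * blinfun_apply s (Y \<omega>) \<partial>M) \<le> D * norm s * (\<integral>\<omega>. G \<omega> \<partial>M)"
  shows "(\<integral>\<omega>. Gs \<omega> * blinfun_apply (s (jf \<omega>)) (Y \<omega>) \<partial>M) \<le> D * A * (\<integral>\<omega>. Gs \<omega> \<partial>M)"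
proof -
  interpret prob_space M by (rule M)
  have jfM[measurable]: "jf \<in> measurable M (count_space UNIV)" by (rule measurable_from_subalg[OF sub jf])
  have GsM[measurable]: "Gs \<in> borel_measurable M" by (rule measurable_from_subalg[OF sub Gs])
  have A0: "0 \<le> A" using sA[of 0] norm_ge_zero order.trans by blast
  have bl[measurable]: "(\<lambda>\<omega>. blinfun_apply (s i) (Y \<omega>)) \<in> borel_measurable M" for i
    by (rule borel_measurable_continuous_on[OF _ Y]) (intro continuous_intros)
  define f where "f = (\<lambda>\<omega>. Gs \<omega> * blinfun_apply (s (jf \<omega>)) (Y \<omega>))"
  have fmeas: "f \<in> borel_measurable M"
    unfolding f_def by (rule measurable_compose_countable[where f="\<lambda>i \<omega>. Gs \<omega> * blinfun_apply (s i) (Y \<omega>)"]) auto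
  have fbd: "\<bar>f \<omega>\<bar> \<le> Bg * (A * c)" if "\<omega> \<in> space M" for \<omega>
  proof -
    have "\<bar>blinfun_apply (s (jf \<omega>)) (Y \<omega>)\<bar> \<le> norm (s (jf \<omega>)) * norm (Y \<omega>)"
      using norm_blinfun[of "s (jf \<omega>)" "Y \<omega>"] by simp
    also have "\<dots> \<le> A * c" using sA Yc[OF that] A0 by (intro mult_mono) auto
    finally have "\<bar>blinfun_apply (s (jf \<omega>)) (Y \<omega>)\<bar> \<le> A * c" .
    thus ?thesis unfolding f_def abs_mult using Gs0[OF that] GsB[OF that]
      by (intro mult_mono) auto
  qed
  have fint: "integrable M f" by (rule bnd_integrable[OF fmeas fbd])
  define G where "G = (\<lambda>j \<omega>. if jf \<omega> = j then Gs \<omega> else 0)"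
  have Gm[measurable]: "G j \<in> borel_measurable F" for j unfolding G_def by measurable
  have GmM[measurable]: "G j \<in> borel_measurable M" for j unfolding G_def by measurable
  have Gint: "integrable M (G j)" for j
  proof (rule bnd_integrable[OF GmM, where Bd=Bg])
    fix \<omega> assume w: "\<omega> \<in> space M"
    show "\<bar>G j \<omega>\<bar> \<le> Bg" using Gs0[OF w] GsB[OF w] by (auto simp: G_def)
  qed
  have Gsint: "integrable M Gs"
    by (rule bnd_integrable[OF GsM, where Bd=Bg]) (use Gs0 GsB in auto)
  define fN where "fN = (\<lambda>N \<omega>. \<Sum>j<N. G j \<omega> * blinfun_apply (s j) (Y \<omega>))"
  have fN_eq: "fN N \<omega> = (if jf \<omega> < N then f \<omega> else 0)" for N \<omega>
  proof -
    have "fN N \<omega> = (\<Sum>j<N. if jf \<omega> = j then Gs \<omega> * blinfun_apply (s j) (Y \<omega>) else 0)"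
      unfolding fN_def G_def by (intro sum.cong) auto
    also have "\<dots> = (if jf \<omega> \<in> {..<N} then Gs \<omega> * blinfun_apply (s (jf \<omega>)) (Y \<omega>) else 0)"
      by (simp add: sum.delta')
    finally show ?thesis by (simp add: f_def)
  qed
  have termint: "integrable M (\<lambda>\<omega>. G j \<omega> * blinfun_apply (s j) (Y \<omega>))" for j
  proof (rule bnd_integrable[where Bd="Bg * (A * c)"])
    show "(\<lambda>\<omega>. G j \<omega> * blinfun_apply (s j) (Y \<omega>)) \<in> borel_measurable M" by measurable
    fix \<omega> assume w: "\<omega> \<in> space M"
    have "\<bar>blinfun_apply (s j) (Y \<omega>)\<bar> \<le> norm (s j) * norm (Y \<omega>)"
      using norm_blinfun[of "s j" "Y \<omega>"] by simp
    also have "\<dots> \<le> A * c" using sA Yc[OF w] A0 by (intro mult_mono) auto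
    finally have "\<bar>blinfun_apply (s j) (Y \<omega>)\<bar> \<le> A * c" .
    thus "\<bar>G j \<omega> * blinfun_apply (s j) (Y \<omega>)\<bar> \<le> Bg * (A * c)" unfolding abs_mult G_def
      using Gs0[OF w] GsB[OF w] A0 by (intro mult_mono) auto
  qed
  have bound: "integral\<^sup>L M (fN N) \<le> D * A * (\<integral>\<omega>. Gs \<omega> \<partial>M)" for N
  proof -
    have "integral\<^sup>L M (fN N) = (\<Sum>j<N. \<integral>\<omega>. G j \<omega> * blinfun_apply (s j) (Y \<omega>) \<partial>M)"
      unfolding fN_def using termint by (simp add: integral_sum)
    also have "\<dots> \<le> (\<Sum>j<N. D * A * (\<integral>\<omega>. G j \<omega> \<partial>M))"
    proof (rule sum_mono)
      fix j
      have "(\<integral>\<omega>. G j \<omega> * blinfun_apply (s j) (Y \<omega>) \<partial>M) \<le> D * norm (s j) * (\<integral>\<omega>. G j \<omega> \<partial>M)"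
      proof (rule H1[OF Gm, where Bd=Bg])
        fix \<omega> assume w: "\<omega> \<in> space M"
        show "0 \<le> G j \<omega>" "G j \<omega> \<le> Bg" using Gs0[OF w] GsB[OF w] by (auto simp: G_def)
      qed
      also have "\<dots> \<le> D * A * (\<integral>\<omega>. G j \<omega> \<partial>M)"
        using sA[of j] D by (intro mult_right_mono mult_left_mono integral_nonneg_AE)
          (auto simp: G_def Gs0)
      finally show "(\<integral>\<omega>. G j \<omega> * blinfun_apply (s j) (Y \<omega>) \<partial>M) \<le> D * A * (\<integral>\<omega>. G j \<omega> \<partial>M)" .
    qed
    also have "\<dots> = D * A * (\<integral>\<omega>. (\<Sum>j<N. G j \<omega>) \<partial>M)"
      using Gint by (simp add: Bochner_Integration.integral_sum sum_distrib_left)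
    also have "\<dots> \<le> D * A * (\<integral>\<omega>. Gs \<omega> \<partial>M)"
    proof (intro mult_left_mono integral_mono)
      show "integrable M (\<lambda>\<omega>. \<Sum>j<N. G j \<omega>)" using Gint by auto
      show "integrable M Gs" by (rule Gsint)
      fix \<omega> assume w: "\<omega> \<in> space M"
      have "(\<Sum>j<N. G j \<omega>) = (if jf \<omega> \<in> {..<N} then Gs \<omega> else 0)"
        unfolding G_def by (simp add: sum.delta')
      thus "(\<Sum>j<N. G j \<omega>) \<le> Gs \<omega>" using Gs0[OF w] by auto
    qed (use D A0 in auto)
    finally show ?thesis .
  qed
  have lim: "(\<lambda>N. integral\<^sup>L M (fN N)) \<longlonglongrightarrow> integral\<^sup>L M f"
  proof (rule integral_dominated_convergence[where w="\<lambda>\<omega>. \<bar>f \<omega>\<bar>"])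
    show "f \<in> borel_measurable M" by (rule fmeas)
    show "fN N \<in> borel_measurable M" for N unfolding fN_def by measurable
    show "integrable M (\<lambda>\<omega>. \<bar>f \<omega>\<bar>)" using fint by auto
    show "AE \<omega> in M. (\<lambda>N. fN N \<omega>) \<longlonglongrightarrow> f \<omega>"
    proof (rule AE_I2)
      fix \<omega>
      have "eventually (\<lambda>N. fN N \<omega> = f \<omega>) sequentially"
        using eventually_ge_at_top[of "Suc (jf \<omega>)"] by eventually_elim (auto simp: fN_eq)
      thus "(\<lambda>N. fN N \<omega>) \<longlonglongrightarrow> f \<omega>" by (rule tendsto_eventually)
    qed
    show "AE \<omega> in M. norm (fN N \<omega>) \<le> \<bar>f \<omega>\<bar>" for N by (rule AE_I2) (auto simp: fN_eq)
  qed
  have "integral\<^sup>L M f \<le> D * A * (\<integral>\<omega>. Gs \<omega> \<partial>M)"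
    by (rule LIMSEQ_le_const2[OF lim]) (use bound in auto)
  thus ?thesis by (simp add: f_def)
qed

lemma borel_measurable_cosh_real[measurable]: "(cosh :: real \<Rightarrow> real) \<in> borel_measurable borel"
  by (rule borel_measurable_continuous_onI) (auto intro!: continuous_intros)

lemma borel_measurable_sinh_real[measurable]: "(sinh :: real \<Rightarrow> real) \<in> borel_measurable borel"
  by (rule borel_measurable_continuous_onI) (auto intro!: continuous_intros)

lemma pi_bound_c:
  assumes mu: "0 \<le> mu" and c: "0 < c" and y: "0 \<le> y" "y \<le> c"
  shows "pi_fun (mu * y) \<le> pi_fun (mu * c) * y\<^sup>2 / c\<^sup>2"
proof (cases "mu = 0")
  case True thus ?thesis by (simp add: pi_fun_def)
next
  case False
  hence mp: "0 < mu" using mu by simp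
  have "pi_fun (mu * y) * (mu * c)\<^sup>2 \<le> pi_fun (mu * c) * (mu * y)\<^sup>2"
    using y mu by (intro pi_fun_scale) (auto intro: mult_left_mono)
  hence "pi_fun (mu * y) * (mu\<^sup>2 * c\<^sup>2) \<le> (pi_fun (mu * c) * y\<^sup>2) * mu\<^sup>2"
    by (simp add: power_mult_distrib algebra_simps)
  hence "pi_fun (mu * y) * c\<^sup>2 \<le> pi_fun (mu * c) * y\<^sup>2"
    using mp by (simp add: algebra_simps)
  thus ?thesis using c by (simp add: field_simps)
qed

lemma key_step:
  fixes M F :: "'a measure" and T Y :: "'a \<Rightarrow> 'b::{banach, second_countable_topology}"
    and A\<^sub>1 A\<^sub>2 mu V D K c :: real
  assumes M: "prob_space M" and sub: "subalgebra M F"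
    and T[measurable]: "T \<in> borel_measurable F" and TK: "\<And>\<omega>. \<omega> \<in> space M \<Longrightarrow> norm (T \<omega>) \<le> K"
    and Y[measurable]: "Y \<in> borel_measurable M" and Yc: "\<And>\<omega>. \<omega> \<in> space M \<Longrightarrow> norm (Y \<omega>) \<le> c"
    and c: "0 < c"
    and A1: "\<And>(x::'b) v. x \<noteq> 0 \<Longrightarrow>
        (\<exists>D. (gateaux_line norm x v has_real_derivative D) (at 0) \<and> \<bar>D\<bar> \<le> A\<^sub>1 * norm v)
      \<and> (\<exists>D2. ((\<lambda>t. deriv (gateaux_line norm x v) t) has_real_derivative D2) (at 0)
              \<and> \<bar>D2\<bar> \<le> A\<^sub>2 * (norm v)\<^sup>2 / norm x)"
    and A1_ge: "1 \<le> A\<^sub>1" and A2: "0 \<le> A\<^sub>2" and mu: "0 \<le> mu" and V: "0 \<le> V" and D: "0 \<le> D"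
    and H2: "\<And>G Bd. G \<in> borel_measurable F \<Longrightarrow> (\<And>\<omega>. \<omega> \<in> space M \<Longrightarrow> 0 \<le> G \<omega>)
        \<Longrightarrow> (\<And>\<omega>. \<omega> \<in> space M \<Longrightarrow> G \<omega> \<le> Bd)
        \<Longrightarrow> (\<integral>\<omega>. G \<omega> * (norm (Y \<omega>))\<^sup>2 \<partial>M) \<le> V * (\<integral>\<omega>. G \<omega> \<partial>M)"
    and H1: "\<And>G Bd s. G \<in> borel_measurable F \<Longrightarrow> (\<And>\<omega>. \<omega> \<in> space M \<Longrightarrow> 0 \<le> G \<omega>)
        \<Longrightarrow> (\<And>\<omega>. \<omega> \<in> space M \<Longrightarrow> G \<omega> \<le> Bd)
        \<Longrightarrow> (\<integral>\<omega>. G \<omega> * blinfun_apply s (Y \<omega>) \<partial>M) \<le> D * norm s * (\<integral>\<omega>. G \<omega> \<partial>M)"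
  shows "(\<integral>\<omega>. cosh (mu * norm (T \<omega> + Y \<omega>)) \<partial>M)
     \<le> (1 + (A\<^sub>1\<^sup>2 + A\<^sub>2) / c\<^sup>2 * V * pi_fun (mu * c) + mu * A\<^sub>1 * D) * (\<integral>\<omega>. cosh (mu * norm (T \<omega>)) \<partial>M)"
proof -
  interpret prob_space M by (rule M)
  have TM[measurable]: "T \<in> borel_measurable M" by (rule measurable_from_subalg[OF sub T])
  have A10: "0 \<le> A\<^sub>1" using A1_ge by simp
  define kap where "kap = (A\<^sub>1\<^sup>2 + A\<^sub>2) / c\<^sup>2 * pi_fun (mu * c)"
  have kap0: "0 \<le> kap" unfolding kap_def using pi_fun_nonneg A2 by simp
  define fac where "fac = 1 + kap * V + mu * A\<^sub>1 * D"
  have fac0: "0 \<le> fac" unfolding fac_def using kap0 V mu A1_ge D by simp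
  define E0 where "E0 = (\<integral>\<omega>. cosh (mu * norm (T \<omega>)) \<partial>M)"
  have E0: "0 \<le> E0" unfolding E0_def by (intro integral_nonneg_AE) simp
  define LHS where "LHS = (\<integral>\<omega>. cosh (mu * norm (T \<omega> + Y \<omega>)) \<partial>M)"
  have K0: "0 \<le> K" using TK[of "SOME x. x \<in> space M"] norm_ge_zero some_in_eq not_empty
    by (metis order.trans)
  have eps: "LHS \<le> exp (2 * mu * e) * (fac * E0)" if e: "0 < e" for e
  proof -
    obtain Dn :: "'b set" where Dn: "countable Dn" "\<And>X. open X \<Longrightarrow> X \<noteq> {} \<Longrightarrow> \<exists>d\<in>Dn. d \<in> X"
      using countable_dense_exists by blast
    have Dne: "Dn \<noteq> {}" using Dn(2)[of UNIV] by auto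
    define d where "d = from_nat_into Dn"
    have rd: "range d = Dn" unfolding d_def by (rule range_from_nat_into[OF Dne Dn(1)])
    have close: "\<exists>j. dist x (d j) < e" for x
    proof -
      obtain y where "y \<in> Dn" "y \<in> ball x e" using Dn(2)[of "ball x e"] e by auto
      thus ?thesis using rd by (metis imageE mem_ball)
    qed
    define jf where "jf = (\<lambda>\<omega>. LEAST j. dist (T \<omega>) (d j) < e)"
    have jfF[measurable]: "jf \<in> measurable F (count_space UNIV)" unfolding jf_def by measurable
    have jfd: "dist (T \<omega>) (d (jf \<omega>)) < e" for \<omega>
      unfolding jf_def by (rule LeastI_ex[OF close])
    define T' where "T' = (\<lambda>\<omega>. d (jf \<omega>))"
    have T'F[measurable]: "T' \<in> borel_measurable F"
      unfolding T'_def by (rule measurable_compose_countable[where f="\<lambda>i \<omega>. d i"]) auto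
    have T'M[measurable]: "T' \<in> borel_measurable M" by (rule measurable_from_subalg[OF sub T'F])
    have T'T: "norm (T \<omega> - T' \<omega>) \<le> e" for \<omega> using jfd[of \<omega>] by (simp add: T'_def dist_norm)
    have T'K: "norm (T' \<omega>) \<le> K + e" if "\<omega> \<in> space M" for \<omega>
      using TK[OF that] T'T[of \<omega>] norm_triangle_ineq4[of "T \<omega>" "T \<omega> - T' \<omega>"] by simp
    define s where "s = (\<lambda>j. if d j = 0 then 0 else Blinfun (Lf (d j)))"
    have sA: "norm (s j) \<le> A\<^sub>1" for j
    proof (cases "d j = 0")
      case True thus ?thesis using A1_ge by (simp add: s_def)
    next
      case False
      have bl: "bounded_linear (Lf (d j))" by (rule Lf_linear[OF A1 False])
      show ?thesis unfolding s_def using False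
        by (auto intro!: norm_blinfun_bound simp: bounded_linear_Blinfun_apply[OF bl]
            Lf_deriv(2)[OF A1 False] A10)
    qed
    have sapp: "blinfun_apply (s (jf \<omega>)) y = (if T' \<omega> = 0 then 0 else Lf (T' \<omega>) y)" for \<omega> y
    proof (cases "T' \<omega> = 0")
      case True thus ?thesis by (simp add: s_def T'_def)
    next
      case False
      have bl: "bounded_linear (Lf (T' \<omega>))" by (rule Lf_linear[OF A1 False])
      thus ?thesis using False by (simp add: s_def T'_def bounded_linear_Blinfun_apply)
    qed
    define Gc where "Gc = (\<lambda>\<omega>. cosh (mu * norm (T' \<omega>)))"
    define Gs where "Gs = (\<lambda>\<omega>. sinh (mu * norm (T' \<omega>)))"
    define Bg where "Bg = cosh (mu * (K + e))"
    have GcF[measurable]: "Gc \<in> borel_measurable F" unfolding Gc_def by measurable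
    have GsF[measurable]: "Gs \<in> borel_measurable F" unfolding Gs_def by measurable
    have GcM[measurable]: "Gc \<in> borel_measurable M" unfolding Gc_def by measurable
    have GsM[measurable]: "Gs \<in> borel_measurable M" unfolding Gs_def by measurable
    have Gc0: "0 \<le> Gc \<omega>" for \<omega> by (simp add: Gc_def)
    have Gs0: "0 \<le> Gs \<omega>" for \<omega> using mu by (simp add: Gs_def)
    have GcB: "Gc \<omega> \<le> Bg" if "\<omega> \<in> space M" for \<omega>
      unfolding Gc_def Bg_def using T'K[OF that] mu by (intro cosh_mono_nonneg mult_left_mono) auto
    have GsGc: "Gs \<omega> \<le> Gc \<omega>" for \<omega> by (simp add: Gs_def Gc_def sinh_le_cosh_real)
    have GsB: "Gs \<omega> \<le> Bg" if "\<omega> \<in> space M" for \<omega> using GsGc[of \<omega>] GcB[OF that] by linarith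
    define Dd where "Dd = (\<lambda>\<omega>. blinfun_apply (s (jf \<omega>)) (Y \<omega>))"
    have bl[measurable]: "(\<lambda>\<omega>. blinfun_apply (s i) (Y \<omega>)) \<in> borel_measurable M" for i
      by (rule borel_measurable_continuous_on[OF _ Y]) (intro continuous_intros)
    have jfM[measurable]: "jf \<in> measurable M (count_space UNIV)" by (rule measurable_from_subalg[OF sub jfF])
    have DdM[measurable]: "Dd \<in> borel_measurable M"
      unfolding Dd_def by (rule measurable_compose_countable[where f="\<lambda>i \<omega>. blinfun_apply (s i) (Y \<omega>)"]) auto
    have Ddb: "\<bar>Dd \<omega>\<bar> \<le> A\<^sub>1 * c" if "\<omega> \<in> space M" for \<omega>
    proof -
      have "\<bar>Dd \<omega>\<bar> \<le> norm (s (jf \<omega>)) * norm (Y \<omega>)"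
        using norm_blinfun[of "s (jf \<omega>)" "Y \<omega>"] by (simp add: Dd_def)
      also have "\<dots> \<le> A\<^sub>1 * c" using sA Yc[OF that] A1_ge by (intro mult_mono) auto
      finally show ?thesis .
    qed
    define R where "R = (\<lambda>\<omega>. exp (mu * e) * (Gc \<omega> + mu * (Gs \<omega> * Dd \<omega>) + kap * (Gc \<omega> * (norm (Y \<omega>))\<^sup>2)))"
    have pw: "cosh (mu * norm (T \<omega> + Y \<omega>)) \<le> R \<omega>" if w: "\<omega> \<in> space M" for \<omega>
    proof -
      have "norm (T \<omega> + Y \<omega>) \<le> norm (T' \<omega> + Y \<omega>) + e"
        using norm_triangle_ineq[of "T' \<omega> + Y \<omega>" "T \<omega> - T' \<omega>"] T'T[of \<omega>] by (simp add: add.commute)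
      hence "mu * norm (T \<omega> + Y \<omega>) \<le> mu * norm (T' \<omega> + Y \<omega>) + mu * e"
        using mu by (metis distrib_left mult_left_mono)
      hence "cosh (mu * norm (T \<omega> + Y \<omega>)) \<le> cosh (mu * norm (T' \<omega> + Y \<omega>) + mu * e)"
        using mu by (intro cosh_mono_nonneg) auto
      also have "\<dots> \<le> cosh (mu * norm (T' \<omega> + Y \<omega>)) * exp (mu * e)"
        using mu e by (intro cosh_add_le) auto
      also have "cosh (mu * norm (T' \<omega> + Y \<omega>)) \<le> Gc \<omega> + mu * (Gs \<omega> * Dd \<omega>) + kap * (Gc \<omega> * (norm (Y \<omega>))\<^sup>2)"
      proof -
        have "cosh (mu * norm (T' \<omega> + Y \<omega>)) \<le> Gc \<omega> + mu * Gs \<omega> * Dd \<omega>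
            + (A\<^sub>1\<^sup>2 + A\<^sub>2) * Gc \<omega> * pi_fun (mu * norm (Y \<omega>))"
          using pointwise_ineq[OF A1 A1_ge A2 mu, of "T' \<omega>" "Y \<omega>"]
          by (simp add: Gc_def Gs_def Dd_def sapp)
        also have "(A\<^sub>1\<^sup>2 + A\<^sub>2) * Gc \<omega> * pi_fun (mu * norm (Y \<omega>))
            \<le> (A\<^sub>1\<^sup>2 + A\<^sub>2) * Gc \<omega> * (pi_fun (mu * c) * (norm (Y \<omega>))\<^sup>2 / c\<^sup>2)"
          using pi_bound_c[OF mu c, of "norm (Y \<omega>)"] Yc[OF w] Gc0[of \<omega>] A2
          by (intro mult_left_mono) auto
        also have "(A\<^sub>1\<^sup>2 + A\<^sub>2) * Gc \<omega> * (pi_fun (mu * c) * (norm (Y \<omega>))\<^sup>2 / c\<^sup>2)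
            = kap * (Gc \<omega> * (norm (Y \<omega>))\<^sup>2)" by (simp add: kap_def)
        finally show ?thesis by (simp add: algebra_simps)
      qed
      hence "cosh (mu * norm (T' \<omega> + Y \<omega>)) * exp (mu * e) \<le> R \<omega>"
        unfolding R_def by (simp add: mult.commute)
      finally show ?thesis .
    qed
    have iGc: "integrable M Gc" by (rule bnd_integrable[OF GcM, where Bd=Bg]) (use Gc0 GcB in auto)
    have iGs: "integrable M Gs" by (rule bnd_integrable[OF GsM, where Bd=Bg]) (use Gs0 GsB in auto)
    have iGsD: "integrable M (\<lambda>\<omega>. Gs \<omega> * Dd \<omega>)"
    proof (rule bnd_integrable[where Bd="Bg * (A\<^sub>1 * c)"])
      show "(\<lambda>\<omega>. Gs \<omega> * Dd \<omega>) \<in> borel_measurable M" by measurable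
      fix \<omega> assume w: "\<omega> \<in> space M"
      show "\<bar>Gs \<omega> * Dd \<omega>\<bar> \<le> Bg * (A\<^sub>1 * c)" unfolding abs_mult
        using Gs0[of \<omega>] GsB[OF w] Ddb[OF w] by (intro mult_mono) auto
    qed
    have iGcY: "integrable M (\<lambda>\<omega>. Gc \<omega> * (norm (Y \<omega>))\<^sup>2)"
    proof (rule bnd_integrable[where Bd="Bg * c\<^sup>2"])
      show "(\<lambda>\<omega>. Gc \<omega> * (norm (Y \<omega>))\<^sup>2) \<in> borel_measurable M" by measurable
      fix \<omega> assume w: "\<omega> \<in> space M"
      show "\<bar>Gc \<omega> * (norm (Y \<omega>))\<^sup>2\<bar> \<le> Bg * c\<^sup>2" unfolding abs_mult
        using Gc0[of \<omega>] GcB[OF w] Yc[OF w] by (intro mult_mono power_mono) (auto intro: power_mono)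
    qed
    have iL: "integrable M (\<lambda>\<omega>. cosh (mu * norm (T \<omega> + Y \<omega>)))"
    proof (rule bnd_integrable[where Bd="cosh (mu * (K + c))"])
      show "(\<lambda>\<omega>. cosh (mu * norm (T \<omega> + Y \<omega>))) \<in> borel_measurable M" by measurable
      fix \<omega> assume w: "\<omega> \<in> space M"
      have "norm (T \<omega> + Y \<omega>) \<le> K + c" using TK[OF w] Yc[OF w] norm_triangle_ineq[of "T \<omega>" "Y \<omega>"] by simp
      thus "\<bar>cosh (mu * norm (T \<omega> + Y \<omega>))\<bar> \<le> cosh (mu * (K + c))"
        using mu by (simp, intro cosh_mono_nonneg mult_left_mono) auto
    qed
    have iT: "integrable M (\<lambda>\<omega>. cosh (mu * norm (T \<omega>)))"
    proof (rule bnd_integrable[where Bd="cosh (mu * K)"])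
      show "(\<lambda>\<omega>. cosh (mu * norm (T \<omega>))) \<in> borel_measurable M" by measurable
      fix \<omega> assume w: "\<omega> \<in> space M"
      thus "\<bar>cosh (mu * norm (T \<omega>))\<bar> \<le> cosh (mu * K)"
        using mu TK[OF w] by (simp, intro cosh_mono_nonneg mult_left_mono) auto
    qed
    define I1 where "I1 = integral\<^sup>L M Gc"
    define I2 where "I2 = (\<integral>\<omega>. Gs \<omega> * Dd \<omega> \<partial>M)"
    define I3 where "I3 = (\<integral>\<omega>. Gc \<omega> * (norm (Y \<omega>))\<^sup>2 \<partial>M)"
    have intR: "integral\<^sup>L M R = exp (mu * e) * (I1 + mu * I2 + kap * I3)"
      unfolding R_def I1_def I2_def I3_def using iGc iGsD iGcY by simp
    have iR: "integrable M R" unfolding R_def using iGc iGsD iGcY by simp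
    have "LHS \<le> integral\<^sup>L M R" unfolding LHS_def
      by (rule integral_mono[OF iL iR pw])
    also have "\<dots> \<le> exp (mu * e) * (fac * I1)"
    proof -
      have "I2 \<le> D * A\<^sub>1 * integral\<^sup>L M Gs"
        unfolding I2_def Dd_def
        by (rule sum_decomp_bound[OF M sub jfF GsF Gs0 GsB Y Yc sA D H1])
      also have "\<dots> \<le> D * A\<^sub>1 * I1" unfolding I1_def
        using D A1_ge by (intro mult_left_mono integral_mono[OF iGs iGc] GsGc) auto
      finally have b2: "I2 \<le> D * A\<^sub>1 * I1" .
      have b3: "I3 \<le> V * I1" unfolding I3_def I1_def
        by (rule H2[OF GcF Gc0 GcB])
      have "I1 + mu * I2 + kap * I3 \<le> I1 + mu * (D * A\<^sub>1 * I1) + kap * (V * I1)"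
        using b2 b3 mu kap0 by (intro add_mono mult_left_mono) auto
      also have "\<dots> = fac * I1" by (simp add: fac_def algebra_simps)
      finally show ?thesis unfolding intR by simp
    qed
    also have "\<dots> \<le> exp (mu * e) * (fac * (exp (mu * e) * E0))"
    proof -
      have "I1 \<le> (\<integral>\<omega>. cosh (mu * norm (T \<omega>)) * exp (mu * e) \<partial>M)" unfolding I1_def
      proof (rule integral_mono[OF iGc])
        show "integrable M (\<lambda>\<omega>. cosh (mu * norm (T \<omega>)) * exp (mu * e))" using iT by simp
        fix \<omega> assume w: "\<omega> \<in> space M"
        have "norm (T' \<omega>) \<le> norm (T \<omega>) + e"
          using norm_triangle_sub[of "T' \<omega>" "T \<omega>"] T'T[of \<omega>] norm_minus_commute[of "T' \<omega>" "T \<omega>"]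
          by linarith
        hence "mu * norm (T' \<omega>) \<le> mu * norm (T \<omega>) + mu * e"
          using mu by (metis distrib_left mult_left_mono)
        hence "Gc \<omega> \<le> cosh (mu * norm (T \<omega>) + mu * e)" unfolding Gc_def
          using mu by (intro cosh_mono_nonneg) auto
        also have "\<dots> \<le> cosh (mu * norm (T \<omega>)) * exp (mu * e)"
          using mu e by (intro cosh_add_le) auto
        finally show "Gc \<omega> \<le> cosh (mu * norm (T \<omega>)) * exp (mu * e)" .
      qed
      hence "I1 \<le> exp (mu * e) * E0" unfolding E0_def by (simp add: mult.commute)
      thus ?thesis using fac0 by (intro mult_left_mono) auto
    qed
    also have "\<dots> = exp (2 * mu * e) * (fac * E0)"
    proof -
      have ee: "exp (mu * e) * exp (mu * e) = exp (2 * mu * e)"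
        by (metis exp_add mult_2 mult.assoc)
      show ?thesis unfolding ee[symmetric] by (simp add: algebra_simps)
    qed
    finally show ?thesis .
  qed
  have lim: "(\<lambda>n. exp (2 * mu * inverse (real (Suc n))) * (fac * E0)) \<longlonglongrightarrow> exp (2 * mu * 0) * (fac * E0)"
    by (intro tendsto_intros LIMSEQ_inverse_real_of_nat)
  have "LHS \<le> fac * E0"
    using LIMSEQ_le_const[OF lim, of LHS] eps by simp
  thus ?thesis unfolding LHS_def fac_def E0_def kap_def by (simp add: algebra_simps)
qed

locale setting =
  fixes M :: "'a measure"
    and X :: "nat \<Rightarrow> 'a \<Rightarrow> 'b::{banach, second_countable_topology}"
    and C :: "('b \<Rightarrow> real) set" and Cn :: "('b \<Rightarrow> real) \<Rightarrow> real"
    and c \<sigma>2 C\<^sub>1 C\<^sub>2 :: real and k :: nat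
  assumes M: "prob_space M"
    and X_meas: "\<And>i. 1 \<le> i \<Longrightarrow> X i \<in> borel_measurable M"
    and X_centered: "\<And>i. 1 \<le> i \<Longrightarrow> integral\<^sup>L M (X i) = 0"
    and CC: "C_class c C Cn"
    and c_pos: "0 < c"
    and X_bdd: "\<And>i \<omega>. 1 \<le> i \<Longrightarrow> \<omega> \<in> space M \<Longrightarrow> norm (X i \<omega>) \<le> c"
    and X_var: "\<And>i. 1 \<le> i \<Longrightarrow> (\<integral>\<omega>. (norm (X i \<omega>))\<^sup>2 \<partial>M) \<le> \<sigma>2"
    and C1_nonneg: "0 \<le> C\<^sub>1" and C2_nonneg: "0 \<le> C\<^sub>2"
    and h1_in: "\<And>s :: 'b \<Rightarrow>\<^sub>L real. restrX c (blinfun_apply s) \<in> C"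
    and h1_bd: "\<And>s :: 'b \<Rightarrow>\<^sub>L real. norm s \<le> 1 \<Longrightarrow> Cn (restrX c (blinfun_apply s)) \<le> C\<^sub>1"
    and h2_in: "restrX c (\<lambda>x. (norm x)\<^sup>2) \<in> C"
    and h2_bd: "Cn (restrX c (\<lambda>x. (norm x)\<^sup>2)) \<le> C\<^sub>2"
    and Phi_fin: "C_mixing_coeff M X C Cn k < \<infinity>"
begin

interpretation prob_space M by (rule M)

definition "Phr = real_of_ereal (C_mixing_coeff M X C Cn k)"

lemma C_props:
  "\<And>f. f \<in> C \<Longrightarrow> f \<in> borel_measurable borel"
  "\<And>f. f \<in> C \<Longrightarrow> bounded (f ` cball 0 c)"
  "(\<lambda>x. 0) \<in> C"
  "\<And>f a. f \<in> C \<Longrightarrow> (\<lambda>x. a * f x) \<in> C"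
  "\<And>f. f \<in> C \<Longrightarrow> 0 \<le> Cn f"
  "\<And>f a. f \<in> C \<Longrightarrow> Cn (\<lambda>x. a * f x) = \<bar>a\<bar> * Cn f"
proof -
  note cc = CC[unfolded C_class_def]
  note c1 = conjunct1[OF cc]
  note c2 = conjunct1[OF conjunct2[OF cc]]
  note c4 = conjunct1[OF conjunct2[OF conjunct2[OF conjunct2[OF cc]]]]
  note c6 = conjunct1[OF conjunct2[OF conjunct2[OF conjunct2[OF conjunct2[OF conjunct2[OF cc]]]]]]
  note c7 = conjunct1[OF conjunct2[OF conjunct2[OF conjunct2[OF conjunct2[OF conjunct2[OF conjunct2[OF cc]]]]]]]
  show "\<And>f. f \<in> C \<Longrightarrow> f \<in> borel_measurable borel" using c1 by blast
  show "\<And>f. f \<in> C \<Longrightarrow> bounded (f ` cball 0 c)" using c1 by blast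
  show "(\<lambda>x. 0) \<in> C" by (rule c2)
  show "\<And>f a. f \<in> C \<Longrightarrow> (\<lambda>x. a * f x) \<in> C" using c4 by blast
  show "\<And>f. f \<in> C \<Longrightarrow> 0 \<le> Cn f" using c6 by blast
  show "\<And>f a. f \<in> C \<Longrightarrow> Cn (\<lambda>x. a * f x) = \<bar>a\<bar> * Cn f" using c7 by blast
qed

lemma nat_filt_gen_sub: "(\<Union>j\<in>{1..i}. {X j -` A \<inter> space M | A. A \<in> sets borel}) \<subseteq> Pow (space M)"
  by auto

lemma space_nat_filt: "space (nat_filt M X i) = space M"
  unfolding nat_filt_def using nat_filt_gen_sub by simp

lemma sets_nat_filt: "sets (nat_filt M X i) = sigma_sets (space M) (\<Union>j\<in>{1..i}. {X j -` A \<inter> space M | A. A \<in> sets borel})"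
  unfolding nat_filt_def using nat_filt_gen_sub by simp

lemma subalg_nat_filt: "subalgebra M (nat_filt M X i)"
proof -
  have ms: "X j -` A \<inter> space M \<in> sets M" if "j \<in> {1..i}" "A \<in> sets borel" for j A
    using measurable_sets[OF X_meas that(2)] that(1) by simp
  have "(\<Union>j\<in>{1..i}. {X j -` A \<inter> space M | A. A \<in> sets borel}) \<subseteq> sets M"
    using ms by blast
  hence "sigma_sets (space M) (\<Union>j\<in>{1..i}. {X j -` A \<inter> space M | A. A \<in> sets borel}) \<subseteq> sets M"
    by (rule sets.sigma_sets_subset)
  thus ?thesis unfolding subalgebra_def sets_nat_filt space_nat_filt by simp
qed

lemma sfs_nat_filt: "sigma_finite_subalgebra M (nat_filt M X i)"
proof -
  have "finite_measure_subalgebra M (nat_filt M X i)"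
    by (intro finite_measure_subalgebra.intro finite_measure_subalgebra_axioms.intro
        finite_measure_axioms subalg_nat_filt)
  thus ?thesis by (rule finite_measure_subalgebra_is_sigma_finite)
qed

lemma X_meas_filt:
  assumes j: "1 \<le> j" "j \<le> i"
  shows "X j \<in> borel_measurable (nat_filt M X i)"
proof (rule measurableI)
  fix x assume "x \<in> space (nat_filt M X i)"
  show "X j x \<in> space borel" by simp
next
  fix A :: "'b set" assume A: "A \<in> sets borel"
  have m1: "X j -` A \<inter> space M \<in> {X j -` A \<inter> space M | A. A \<in> sets borel}"
    using A by (intro CollectI exI[of _ A]) simp
  have "X j -` A \<inter> space M \<in> (\<Union>j\<in>{1..i}. {X j -` A \<inter> space M | A. A \<in> sets borel})"
    by (rule UN_I[where a=j and B="\<lambda>j. {X j -` A \<inter> space M | A. A \<in> sets borel}", OF _ m1]) (use j in simp)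
  thus "X j -` A \<inter> space (nat_filt M X i) \<in> sets (nat_filt M X i)"
    unfolding space_nat_filt sets_nat_filt by (rule sigma_sets.Basic)
qed

lemma phi_integrable:
  assumes "\<phi> \<in> C" "1 \<le> i"
  shows "integrable M (\<lambda>\<omega>. \<phi> (X i \<omega>))"
proof -
  obtain Bd where Bd: "\<And>x. x \<in> cball 0 c \<Longrightarrow> norm (\<phi> x) \<le> Bd"
    using C_props(2)[OF assms(1)] unfolding bounded_iff by blast
  have m: "(\<lambda>\<omega>. \<phi> (X i \<omega>)) \<in> borel_measurable M"
    using measurable_comp[OF X_meas[OF assms(2)] C_props(1)[OF assms(1)]] by (simp add: comp_def)
  show ?thesis
    by (rule integrable_const_bound[where B=Bd]) (use m Bd X_bdd[OF assms(2)] in auto)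
qed

lemma Phi_nonneg: "0 \<le> C_mixing_coeff M X C Cn k"
proof -
  let ?S = "{(\<phi>, i). \<phi> \<in> C \<and> Cn \<phi> \<le> 1 \<and> 1 \<le> i}"
  let ?g = "\<lambda>p. esssup M (\<lambda>\<omega>. ereal \<bar>real_cond_exp M (nat_filt M X (snd p)) (\<lambda>\<omega>. fst p (X (snd p + k) \<omega>)) \<omega>
                          - (\<integral>\<omega>'. fst p (X (snd p + k) \<omega>') \<partial>M)\<bar>)"
  have z: "Cn (\<lambda>x. 0) = 0" using C_props(6)[OF C_props(3), of 0] by simp
  have mem: "((\<lambda>x. 0::real), 1::nat) \<in> ?S" using C_props(3) z by simp
  have "(0::ereal) = esssup M (\<lambda>\<omega>. 0)" by (rule esssup_const[symmetric]) (simp add: emeasure_space_1)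
  also have "\<dots> \<le> ?g ((\<lambda>x. 0), 1)"
    by (rule esssup_mono) auto
  also have "\<dots> \<le> C_mixing_coeff M X C Cn k"
    unfolding C_mixing_coeff_def by (rule SUP_upper[OF mem])
  finally show ?thesis .
qed

lemma Phi_eq: "C_mixing_coeff M X C Cn k = ereal Phr"
proof -
  have "\<bar>C_mixing_coeff M X C Cn k\<bar> \<noteq> \<infinity>" using Phi_nonneg Phi_fin by auto
  thus ?thesis unfolding Phr_def by (simp add: ereal_real)
qed

lemma Phr_nonneg: "0 \<le> Phr"
  using Phi_nonneg unfolding Phi_eq by simp

lemma mix_unit:
  assumes "\<phi> \<in> C" "Cn \<phi> \<le> 1" "1 \<le> i"
  shows "AE \<omega> in M. \<bar>real_cond_exp M (nat_filt M X i) (\<lambda>\<omega>. \<phi> (X (i + k) \<omega>)) \<omega>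
                          - (\<integral>\<omega>'. \<phi> (X (i + k) \<omega>') \<partial>M)\<bar> \<le> Phr"
proof -
  let ?f = "\<lambda>\<omega>. ereal \<bar>real_cond_exp M (nat_filt M X i) (\<lambda>\<omega>. \<phi> (X (i + k) \<omega>)) \<omega>
                          - (\<integral>\<omega>'. \<phi> (X (i + k) \<omega>') \<partial>M)\<bar>"
  have "esssup M ?f \<le> C_mixing_coeff M X C Cn k"
    unfolding C_mixing_coeff_def
    by (rule SUP_upper2[of "(\<phi>, i)"]) (use assms in auto)
  hence le: "esssup M ?f \<le> ereal Phr" using Phi_eq by simp
  show ?thesis using esssup_AE[of ?f M]
  proof eventually_elim
    case (elim \<omega>)
    have "?f \<omega> \<le> ereal Phr" by (rule order.trans[OF elim le])
    thus ?case by simp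
  qed
qed

lemma mix_bound:
  assumes phi: "\<phi> \<in> C" and i: "1 \<le> i"
  shows "AE \<omega> in M. real_cond_exp M (nat_filt M X i) (\<lambda>\<omega>. \<phi> (X (i + k) \<omega>)) \<omega>
            \<le> (\<integral>\<omega>'. \<phi> (X (i + k) \<omega>') \<partial>M) + Cn \<phi> * Phr"
proof -
  interpret sfs: sigma_finite_subalgebra M "nat_filt M X i" by (rule sfs_nat_filt)
  have ik: "1 \<le> i + k" using i by simp
  note int = phi_integrable[OF phi ik]
  define ce where "ce = real_cond_exp M (nat_filt M X i) (\<lambda>\<omega>. \<phi> (X (i + k) \<omega>))"
  define m0 where "m0 = (\<integral>\<omega>'. \<phi> (X (i + k) \<omega>') \<partial>M)"
  have Cn0: "0 \<le> Cn \<phi>" by (rule C_props(5)[OF phi])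
  show ?thesis
  proof (cases "Cn \<phi> = 0")
    case False
    hence pos: "0 < Cn \<phi>" using Cn0 by simp
    define a where "a = 1 / Cn \<phi>"
    have apos: "0 < a" using pos by (simp add: a_def)
    have psiC: "(\<lambda>x. a * \<phi> x) \<in> C" by (rule C_props(4)[OF phi])
    have "Cn (\<lambda>x. a * \<phi> x) = 1" using C_props(6)[OF phi, of a] pos apos by (simp add: a_def)
    hence ae1: "AE \<omega> in M. \<bar>real_cond_exp M (nat_filt M X i) (\<lambda>\<omega>. a * \<phi> (X (i + k) \<omega>)) \<omega>
                          - (\<integral>\<omega>'. a * \<phi> (X (i + k) \<omega>') \<partial>M)\<bar> \<le> Phr"
      using mix_unit[OF psiC _ i] by simp
    have ae2: "AE \<omega> in M. real_cond_exp M (nat_filt M X i) (\<lambda>\<omega>. a * \<phi> (X (i + k) \<omega>)) \<omega> = a * ce \<omega>"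
      unfolding ce_def by (rule sfs.real_cond_exp_cmult[OF int])
    show ?thesis
      using ae1 ae2
    proof eventually_elim
      case (elim \<omega>)
      hence "\<bar>a * ce \<omega> - a * m0\<bar> \<le> Phr" by (simp add: m0_def)
      hence "a * (ce \<omega> - m0) \<le> Phr" by (simp add: algebra_simps)
      hence "ce \<omega> - m0 \<le> Phr / a" using apos by (simp add: field_simps)
      hence "ce \<omega> \<le> m0 + Cn \<phi> * Phr" by (simp add: a_def mult.commute)
      thus ?case by (simp add: ce_def m0_def)
    qed
  next
    case True
    have ae: "AE \<omega> in M. \<forall>n::nat. \<bar>real n * ce \<omega> - real n * m0\<bar> \<le> Phr"
    proof (rule AE_all_countable[THEN iffD2], rule allI)
      fix n :: nat
      have psiC: "(\<lambda>x. real n * \<phi> x) \<in> C" by (rule C_props(4)[OF phi])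
      have "Cn (\<lambda>x. real n * \<phi> x) = 0" using C_props(6)[OF phi, of "real n"] True by simp
      hence ae1: "AE \<omega> in M. \<bar>real_cond_exp M (nat_filt M X i) (\<lambda>\<omega>. real n * \<phi> (X (i + k) \<omega>)) \<omega>
                          - (\<integral>\<omega>'. real n * \<phi> (X (i + k) \<omega>') \<partial>M)\<bar> \<le> Phr"
        using mix_unit[OF psiC _ i] by simp
      have ae2: "AE \<omega> in M. real_cond_exp M (nat_filt M X i) (\<lambda>\<omega>. real n * \<phi> (X (i + k) \<omega>)) \<omega> = real n * ce \<omega>"
        unfolding ce_def by (rule sfs.real_cond_exp_cmult[OF int])
      show "AE \<omega> in M. \<bar>real n * ce \<omega> - real n * m0\<bar> \<le> Phr"
        using ae1 ae2 by eventually_elim (simp add: m0_def)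
    qed
    show ?thesis
      using ae
    proof eventually_elim
      case (elim \<omega>)
      show ?case
      proof (rule ccontr)
        assume "\<not> ?case"
        hence d: "0 < ce \<omega> - m0" using True by (simp add: ce_def m0_def)
        obtain n :: nat where n: "Phr < real n * (ce \<omega> - m0)" using ex_less_of_nat_mult[OF d] by blast
        have e1: "real n * ce \<omega> - real n * m0 = real n * (ce \<omega> - m0)" by (simp add: algebra_simps)
        have e2: "0 \<le> real n * (ce \<omega> - m0)" using d by simp
        have "\<bar>real n * ce \<omega> - real n * m0\<bar> = real n * (ce \<omega> - m0)"
          using e1 e2 by linarith
        thus False using elim[rule_format, of n] n by simp
      qed
    qed
  qed
qed

end

context setting
begin

interpretation prob_space M by (rule M)

lemma Xk_meas: "1 \<le> i \<Longrightarrow> (\<lambda>\<omega>. \<phi> (X i \<omega>)) \<in> borel_measurable M" if "\<phi> \<in> C"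
  using measurable_comp[OF X_meas C_props(1)[OF that]] by (simp add: comp_def)

lemma H_gen:
  assumes phi: "\<phi> \<in> C" and i: "1 \<le> i"
    and G: "G \<in> borel_measurable (nat_filt M X i)"
    and G0: "\<And>\<omega>. \<omega> \<in> space M \<Longrightarrow> 0 \<le> G \<omega>" and GB: "\<And>\<omega>. \<omega> \<in> space M \<Longrightarrow> G \<omega> \<le> Bd"
  shows "(\<integral>\<omega>. G \<omega> * \<phi> (X (i + k) \<omega>) \<partial>M)
     \<le> ((\<integral>\<omega>. \<phi> (X (i + k) \<omega>) \<partial>M) + Cn \<phi> * Phr) * (\<integral>\<omega>. G \<omega> \<partial>M)"
proof -
  interpret sfs: sigma_finite_subalgebra M "nat_filt M X i" by (rule sfs_nat_filt)
  have ik: "1 \<le> i + k" using i by simp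
  have GM: "G \<in> borel_measurable M" by (rule measurable_from_subalg[OF subalg_nat_filt G])
  have pm: "(\<lambda>\<omega>. \<phi> (X (i + k) \<omega>)) \<in> borel_measurable M" by (rule Xk_meas[OF phi ik])
  obtain Bp where Bp: "\<And>x. x \<in> cball 0 c \<Longrightarrow> norm (\<phi> x) \<le> Bp"
    using C_props(2)[OF phi] unfolding bounded_iff by blast
  have int1: "integrable M (\<lambda>\<omega>. G \<omega> * \<phi> (X (i + k) \<omega>))"
  proof (rule integrable_const_bound[where B="Bd * Bp"])
    show "(\<lambda>\<omega>. G \<omega> * \<phi> (X (i + k) \<omega>)) \<in> borel_measurable M" using GM pm by simp
    show "AE \<omega> in M. norm (G \<omega> * \<phi> (X (i + k) \<omega>)) \<le> Bd * Bp"
    proof (rule AE_I2)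
      fix \<omega> assume w: "\<omega> \<in> space M"
      have "norm (\<phi> (X (i + k) \<omega>)) \<le> Bp" using Bp X_bdd[OF ik w] by simp
      thus "norm (G \<omega> * \<phi> (X (i + k) \<omega>)) \<le> Bd * Bp"
        unfolding norm_mult using G0[OF w] GB[OF w] by (intro mult_mono) auto
    qed
  qed
  have Gint: "integrable M G"
    by (rule integrable_const_bound[where B=Bd]) (use GM G0 GB in auto)
  define ce where "ce = real_cond_exp M (nat_filt M X i) (\<lambda>\<omega>. \<phi> (X (i + k) \<omega>))"
  define m where "m = (\<integral>\<omega>. \<phi> (X (i + k) \<omega>) \<partial>M) + Cn \<phi> * Phr"
  have e: "(\<integral>\<omega>. G \<omega> * ce \<omega> \<partial>M) = (\<integral>\<omega>. G \<omega> * \<phi> (X (i + k) \<omega>) \<partial>M)"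
    unfolding ce_def by (rule sfs.real_cond_exp_intg(2)[OF int1 G pm])
  have ic: "integrable M (\<lambda>\<omega>. G \<omega> * ce \<omega>)"
    unfolding ce_def by (rule sfs.real_cond_exp_intg(1)[OF int1 G pm])
  have "(\<integral>\<omega>. G \<omega> * ce \<omega> \<partial>M) \<le> (\<integral>\<omega>. m * G \<omega> \<partial>M)"
  proof (rule integral_mono_AE[OF ic])
    show "integrable M (\<lambda>\<omega>. m * G \<omega>)" using Gint by simp
    show "AE \<omega> in M. G \<omega> * ce \<omega> \<le> m * G \<omega>"
      using mix_bound[OF phi i] AE_space
    proof eventually_elim
      case (elim \<omega>)
      hence "G \<omega> * ce \<omega> \<le> G \<omega> * m" using G0 unfolding ce_def m_def by (intro mult_left_mono) auto
      thus ?case by (simp add: mult.commute)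
    qed
  qed
  thus ?thesis using e by (simp add: m_def)
qed

lemma restr_norm2: "\<omega> \<in> space M \<Longrightarrow> 1 \<le> j \<Longrightarrow> restrX c (\<lambda>x. (norm x)\<^sup>2) (X j \<omega>) = (norm (X j \<omega>))\<^sup>2"
  using X_bdd by (simp add: restrX_def)

lemma restr_lin: "\<omega> \<in> space M \<Longrightarrow> 1 \<le> j \<Longrightarrow> restrX c (blinfun_apply s) (X j \<omega>) = blinfun_apply s (X j \<omega>)"
  using X_bdd by (simp add: restrX_def)

lemma H2:
  assumes i: "1 \<le> i"
    and G: "G \<in> borel_measurable (nat_filt M X i)"
    and G0: "\<And>\<omega>. \<omega> \<in> space M \<Longrightarrow> 0 \<le> G \<omega>" and GB: "\<And>\<omega>. \<omega> \<in> space M \<Longrightarrow> G \<omega> \<le> Bd"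
  shows "(\<integral>\<omega>. G \<omega> * (norm (X (i + k) \<omega>))\<^sup>2 \<partial>M) \<le> (\<sigma>2 + C\<^sub>2 * Phr) * (\<integral>\<omega>. G \<omega> \<partial>M)"
proof -
  let ?p = "restrX c (\<lambda>x. (norm x)\<^sup>2)"
  have ik: "1 \<le> i + k" using i by simp
  have "(\<integral>\<omega>. G \<omega> * (norm (X (i + k) \<omega>))\<^sup>2 \<partial>M) = (\<integral>\<omega>. G \<omega> * ?p (X (i + k) \<omega>) \<partial>M)"
    by (rule Bochner_Integration.integral_cong) (auto simp: restr_norm2[OF _ ik])
  also have "\<dots> \<le> ((\<integral>\<omega>. ?p (X (i + k) \<omega>) \<partial>M) + Cn ?p * Phr) * (\<integral>\<omega>. G \<omega> \<partial>M)"
    by (rule H_gen[OF h2_in i G G0 GB])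
  also have "\<dots> \<le> (\<sigma>2 + C\<^sub>2 * Phr) * (\<integral>\<omega>. G \<omega> \<partial>M)"
  proof (rule mult_right_mono)
    have "(\<integral>\<omega>. ?p (X (i + k) \<omega>) \<partial>M) = (\<integral>\<omega>. (norm (X (i + k) \<omega>))\<^sup>2 \<partial>M)"
      by (rule Bochner_Integration.integral_cong) (auto simp: restr_norm2[OF _ ik])
    also have "\<dots> \<le> \<sigma>2" by (rule X_var[OF ik])
    finally show "(\<integral>\<omega>. ?p (X (i + k) \<omega>) \<partial>M) + Cn ?p * Phr \<le> \<sigma>2 + C\<^sub>2 * Phr"
      using h2_bd Phr_nonneg by (intro add_mono mult_right_mono) auto
    show "0 \<le> (\<integral>\<omega>. G \<omega> \<partial>M)" by (rule integral_nonneg_AE) (use G0 in \<open>auto intro: AE_I2\<close>)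
  qed
  finally show ?thesis .
qed

lemma Cn_lin: "Cn (restrX c (blinfun_apply s)) \<le> norm s * C\<^sub>1"
proof (cases "s = 0")
  case True
  have "restrX c (blinfun_apply s) = (\<lambda>x. 0 * (\<lambda>x. 0) x)" using True by (simp add: restrX_def fun_eq_iff)
  hence "Cn (restrX c (blinfun_apply s)) = 0" using C_props(6)[OF C_props(3), of 0] by simp
  thus ?thesis using True by simp
next
  case False
  define s' where "s' = (1 / norm s) *\<^sub>R s"
  have ns': "norm s' = 1" using False by (simp add: s'_def)
  have "restrX c (blinfun_apply s) = (\<lambda>x. norm s * restrX c (blinfun_apply s') x)"
    using False by (simp add: restrX_def fun_eq_iff s'_def blinfun.scaleR_left)
  hence "Cn (restrX c (blinfun_apply s)) = norm s * Cn (restrX c (blinfun_apply s'))"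
    using C_props(6)[OF h1_in[of s'], of "norm s"] by simp
  also have "\<dots> \<le> norm s * C\<^sub>1" using h1_bd[of s'] ns' by (intro mult_left_mono) auto
  finally show ?thesis .
qed

lemma H1:
  assumes i: "1 \<le> i"
    and G: "G \<in> borel_measurable (nat_filt M X i)"
    and G0: "\<And>\<omega>. \<omega> \<in> space M \<Longrightarrow> 0 \<le> G \<omega>" and GB: "\<And>\<omega>. \<omega> \<in> space M \<Longrightarrow> G \<omega> \<le> Bd"
  shows "(\<integral>\<omega>. G \<omega> * blinfun_apply s (X (i + k) \<omega>) \<partial>M) \<le> (C\<^sub>1 * Phr) * norm s * (\<integral>\<omega>. G \<omega> \<partial>M)"
proof -
  let ?p = "restrX c (blinfun_apply s)"
  have ik: "1 \<le> i + k" using i by simp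
  have "(\<integral>\<omega>. G \<omega> * blinfun_apply s (X (i + k) \<omega>) \<partial>M) = (\<integral>\<omega>. G \<omega> * ?p (X (i + k) \<omega>) \<partial>M)"
    by (rule Bochner_Integration.integral_cong) (auto simp: restr_lin[OF _ ik])
  also have "\<dots> \<le> ((\<integral>\<omega>. ?p (X (i + k) \<omega>) \<partial>M) + Cn ?p * Phr) * (\<integral>\<omega>. G \<omega> \<partial>M)"
    by (rule H_gen[OF h1_in i G G0 GB])
  also have "\<dots> \<le> (C\<^sub>1 * Phr) * norm s * (\<integral>\<omega>. G \<omega> \<partial>M)"
  proof (rule mult_right_mono)
    have iX: "integrable M (X (i + k))"
      by (rule integrable_const_bound[where B=c]) (use X_meas[OF ik] X_bdd[OF ik] in auto)
    have "(\<integral>\<omega>. ?p (X (i + k) \<omega>) \<partial>M) = (\<integral>\<omega>. blinfun_apply s (X (i + k) \<omega>) \<partial>M)"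
      by (rule Bochner_Integration.integral_cong) (auto simp: restr_lin[OF _ ik])
    also have "\<dots> = blinfun_apply s (integral\<^sup>L M (X (i + k)))"
      by (rule integral_bounded_linear[OF blinfun.bounded_linear_right iX])
    also have "\<dots> = 0" using X_centered[OF ik] by simp
    finally show "(\<integral>\<omega>. ?p (X (i + k) \<omega>) \<partial>M) + Cn ?p * Phr \<le> C\<^sub>1 * Phr * norm s"
      using mult_right_mono[OF Cn_lin[of s] Phr_nonneg] by (simp add: algebra_simps)
    show "0 \<le> (\<integral>\<omega>. G \<omega> \<partial>M)" by (rule integral_nonneg_AE) (use G0 in \<open>auto intro: AE_I2\<close>)
  qed
  finally show ?thesis .
qed

end

lemma decomp_sum:
  fixes f :: "nat \<Rightarrow> 'b::comm_monoid_add"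
  assumes k: "1 \<le> k" and n: "n = l * k + r" and r: "r < k"
  shows "(\<Sum>i\<in>{1..n}. f i) = (\<Sum>j\<in>{1..k}. \<Sum>q\<in>{q. q < Suc l \<and> j + q * k \<le> n}. f (j + q * k))"
proof -
  define S where "S = Sigma {1..k} (\<lambda>j. {q. q < Suc l \<and> j + q * k \<le> n})"
  define h where "h = (\<lambda>p::nat \<times> nat. fst p + snd p * k)"
  have fin: "finite {q. q < Suc l \<and> j + q * k \<le> n}" for j by simp
  have "(\<Sum>j\<in>{1..k}. \<Sum>q\<in>{q. q < Suc l \<and> j + q * k \<le> n}. f (j + q * k)) = (\<Sum>p\<in>S. f (h p))"
    unfolding S_def h_def by (subst sum.Sigma) (auto simp: fin split_beta)
  also have "\<dots> = (\<Sum>i\<in>{1..n}. f i)"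
  proof (rule sum.reindex_bij_betw)
    show "bij_betw h S {1..n}"
    proof (rule bij_betw_imageI)
      have key0: "(a + q * k) div k = q \<and> (a + q * k) mod k = a" if "a < k" for a q
        using that k by simp
      have key: "(j - 1 + q * k) div k = q \<and> (j - 1 + q * k) mod k = j - 1" if "1 \<le> j" "j \<le> k" for j q
        by (rule key0) (use that in simp)
      show "inj_on h S"
      proof (rule inj_onI)
        fix p p' assume p: "p \<in> S" "p' \<in> S" "h p = h p'"
        obtain j q where pj: "p = (j, q)" by (cases p)
        obtain j' q' where pj': "p' = (j', q')" by (cases p')
        have jj: "1 \<le> j" "j \<le> k" "1 \<le> j'" "j' \<le> k" using p(1,2) pj pj' by (auto simp: S_def)
        have e: "j - 1 + q * k = j' - 1 + q' * k" using p(3) jj pj pj' by (simp add: h_def)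
        have "q = q'" using key[OF jj(1,2), of q] key[OF jj(3,4), of q'] e by metis
        moreover have "j = j'" using key[OF jj(1,2), of q] key[OF jj(3,4), of q'] e jj by (metis le_add_diff_inverse2)
        ultimately show "p = p'" using pj pj' by simp
      qed
      show "h ` S = {1..n}"
      proof
        show "h ` S \<subseteq> {1..n}" by (auto simp: S_def h_def)
        show "{1..n} \<subseteq> h ` S"
        proof
          fix i assume i: "i \<in> {1..n}"
          define j where "j = (i - 1) mod k + 1"
          define q where "q = (i - 1) div k"
          have hi: "j + q * k = i" using i unfolding j_def q_def
            by (metis (no_types, lifting) One_nat_def Suc_pred add.commute add.left_commute atLeastAtMost_iff
                less_eq_Suc_le mod_div_mult_eq plus_1_eq_Suc)
          have jk: "1 \<le> j" "j \<le> k" unfolding j_def using k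
            by (auto simp: Suc_le_eq)
          have "i - 1 < Suc l * k" using i n r by auto
          hence ql: "q < Suc l" unfolding q_def by (simp add: less_mult_imp_div_less)
          have "(j, q) \<in> S" using jk ql hi i by (auto simp: S_def)
          moreover have "h (j, q) = i" using hi by (simp add: h_def)
          ultimately show "i \<in> h ` S" by (metis imageI)
        qed
      qed
    qed
  qed
  finally show ?thesis by simp
qed

lemma exp_avg_le:
  assumes "finite S" "S \<noteq> {}"
  shows "exp (\<Sum>j\<in>S. (1 / real (card S)) * y j) \<le> (\<Sum>j\<in>S. (1 / real (card S)) * exp (y j))"
proof -
  have "exp (\<Sum>j\<in>S. (1 / real (card S)) *\<^sub>R y j) \<le> (\<Sum>j\<in>S. (1 / real (card S)) * exp (y j))"
    by (rule convex_on_sum[OF assms exp_convex]) (use assms in auto)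
  thus ?thesis by simp
qed

context setting
begin

interpretation prob_space M by (rule M)

lemma sig0: "0 \<le> \<sigma>2"
proof -
  have "0 \<le> (\<integral>\<omega>. (norm (X 1 \<omega>))\<^sup>2 \<partial>M)" by (rule integral_nonneg_AE) simp
  moreover have "(\<integral>\<omega>. (norm (X 1 \<omega>))\<^sup>2 \<partial>M) \<le> \<sigma>2" by (rule X_var) simp
  ultimately show ?thesis by linarith
qed

lemma first_bound:
  fixes A\<^sub>1 A\<^sub>2 mu :: real
  assumes A1: "\<And>(x::'b) v. x \<noteq> 0 \<Longrightarrow>
        (\<exists>D. (gateaux_line norm x v has_real_derivative D) (at 0) \<and> \<bar>D\<bar> \<le> A\<^sub>1 * norm v)
      \<and> (\<exists>D2. ((\<lambda>t. deriv (gateaux_line norm x v) t) has_real_derivative D2) (at 0)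
              \<and> \<bar>D2\<bar> \<le> A\<^sub>2 * (norm v)\<^sup>2 / norm x)"
    and A1_ge: "1 \<le> A\<^sub>1" and A2: "0 \<le> A\<^sub>2" and mu: "0 \<le> mu" and j: "1 \<le> j"
  shows "(\<integral>\<omega>. cosh (mu * norm (X j \<omega>)) \<partial>M) \<le> 1 + (A\<^sub>1\<^sup>2 + A\<^sub>2) / c\<^sup>2 * \<sigma>2 * pi_fun (mu * c)"
proof -
  define kap where "kap = (A\<^sub>1\<^sup>2 + A\<^sub>2) / c\<^sup>2 * pi_fun (mu * c)"
  have kap0: "0 \<le> kap" unfolding kap_def using A2 pi_fun_nonneg by simp
  have Xm[measurable]: "X j \<in> borel_measurable M" by (rule X_meas[OF j])
  have pw: "cosh (mu * norm (X j \<omega>)) \<le> 1 + kap * (norm (X j \<omega>))\<^sup>2" if w: "\<omega> \<in> space M" for \<omega>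
  proof -
    have "cosh (mu * norm (0 + X j \<omega>)) \<le> cosh (mu * norm (0::'b)) + mu * sinh (mu * norm (0::'b)) * 0
           + (A\<^sub>1\<^sup>2 + A\<^sub>2) * cosh (mu * norm (0::'b)) * pi_fun (mu * norm (X j \<omega>))"
      using pointwise_ineq[OF A1 A1_ge A2 mu, of 0 "X j \<omega>"] by simp
    hence "cosh (mu * norm (X j \<omega>)) \<le> 1 + (A\<^sub>1\<^sup>2 + A\<^sub>2) * pi_fun (mu * norm (X j \<omega>))" by simp
    also have "\<dots> \<le> 1 + (A\<^sub>1\<^sup>2 + A\<^sub>2) * (pi_fun (mu * c) * (norm (X j \<omega>))\<^sup>2 / c\<^sup>2)"
      using pi_bound_c[OF mu c_pos, of "norm (X j \<omega>)"] X_bdd[OF j w] A2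
      by (intro add_left_mono mult_left_mono) auto
    also have "\<dots> = 1 + kap * (norm (X j \<omega>))\<^sup>2" by (simp add: kap_def)
    finally show ?thesis .
  qed
  have i2: "integrable M (\<lambda>\<omega>. (norm (X j \<omega>))\<^sup>2)"
    by (rule integrable_const_bound[where B="c\<^sup>2"]) (use X_bdd[OF j] in \<open>auto intro!: AE_I2 power_mono\<close>)
  have i1: "integrable M (\<lambda>\<omega>. cosh (mu * norm (X j \<omega>)))"
  proof (rule integrable_const_bound[where B="cosh (mu * c)"])
    show "AE \<omega> in M. norm (cosh (mu * norm (X j \<omega>))) \<le> cosh (mu * c)"
    proof (rule AE_I2)
      fix \<omega> assume w: "\<omega> \<in> space M"
      show "norm (cosh (mu * norm (X j \<omega>))) \<le> cosh (mu * c)"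
        using X_bdd[OF j w] mu by (simp, intro cosh_mono_nonneg mult_left_mono) auto
    qed
  qed measurable
  have "(\<integral>\<omega>. cosh (mu * norm (X j \<omega>)) \<partial>M) \<le> (\<integral>\<omega>. 1 + kap * (norm (X j \<omega>))\<^sup>2 \<partial>M)"
    by (rule integral_mono[OF i1 _ pw]) (use i2 in simp)
  also have "\<dots> = 1 + kap * (\<integral>\<omega>. (norm (X j \<omega>))\<^sup>2 \<partial>M)" using i2 prob_space by simp
  also have "\<dots> \<le> 1 + kap * \<sigma>2" using X_var[OF j] kap0 by (intro add_left_mono mult_left_mono) auto
  finally show ?thesis by (simp add: kap_def algebra_simps)
qed

lemma block_bound:
  fixes A\<^sub>1 A\<^sub>2 mu :: real and n :: nat
  assumes A1: "\<And>(x::'b) v. x \<noteq> 0 \<Longrightarrow>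
        (\<exists>D. (gateaux_line norm x v has_real_derivative D) (at 0) \<and> \<bar>D\<bar> \<le> A\<^sub>1 * norm v)
      \<and> (\<exists>D2. ((\<lambda>t. deriv (gateaux_line norm x v) t) has_real_derivative D2) (at 0)
              \<and> \<bar>D2\<bar> \<le> A\<^sub>2 * (norm v)\<^sup>2 / norm x)"
    and A1_ge: "1 \<le> A\<^sub>1" and A2: "0 \<le> A\<^sub>2" and mu: "0 \<le> mu" and j: "1 \<le> j" "j \<le> n"
  shows "(\<integral>\<omega>. cosh (mu * norm (\<Sum>q\<in>{q. q < Suc m \<and> j + q * k \<le> n}. X (j + q * k) \<omega>)) \<partial>M)
     \<le> (1 + (A\<^sub>1\<^sup>2 + A\<^sub>2) / c\<^sup>2 * \<sigma>2 * pi_fun (mu * c))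
        * (1 + (A\<^sub>1\<^sup>2 + A\<^sub>2) / c\<^sup>2 * (\<sigma>2 + C\<^sub>2 * Phr) * pi_fun (mu * c) + mu * A\<^sub>1 * (C\<^sub>1 * Phr)) ^ m"
proof (induction m)
  case 0
  have "{q. q < Suc 0 \<and> j + q * k \<le> n} = {0}" using j by auto
  thus ?case using first_bound[OF A1 A1_ge A2 mu j(1)] by simp
next
  case (Suc m)
  define fac where "fac = 1 + (A\<^sub>1\<^sup>2 + A\<^sub>2) / c\<^sup>2 * (\<sigma>2 + C\<^sub>2 * Phr) * pi_fun (mu * c) + mu * A\<^sub>1 * (C\<^sub>1 * Phr)"
  define a1 where "a1 = 1 + (A\<^sub>1\<^sup>2 + A\<^sub>2) / c\<^sup>2 * \<sigma>2 * pi_fun (mu * c)"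
  have fac1: "1 \<le> fac" unfolding fac_def using A2 pi_fun_nonneg[of "mu * c"] Phr_nonneg C2_nonneg C1_nonneg mu A1_ge sig0
    by (intro add_increasing2 add_increasing mult_nonneg_nonneg divide_nonneg_nonneg) auto
  have a10: "0 \<le> a1" unfolding a1_def using A2 pi_fun_nonneg[of "mu * c"] sig0
    by (intro add_nonneg_nonneg mult_nonneg_nonneg divide_nonneg_nonneg) auto
  define Qm where "Qm = {q. q < Suc m \<and> j + q * k \<le> n}"
  define T where "T = (\<lambda>\<omega>. \<Sum>q\<in>Qm. X (j + q * k) \<omega>)"
  have IH: "(\<integral>\<omega>. cosh (mu * norm (T \<omega>)) \<partial>M) \<le> a1 * fac ^ m"
    using Suc.IH unfolding T_def Qm_def a1_def fac_def .
  show ?case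
  proof (cases "j + Suc m * k \<le> n")
    case False
    hence "{q. q < Suc (Suc m) \<and> j + q * k \<le> n} = Qm" unfolding Qm_def using less_Suc_eq by auto
    hence "(\<integral>\<omega>. cosh (mu * norm (\<Sum>q\<in>{q. q < Suc (Suc m) \<and> j + q * k \<le> n}. X (j + q * k) \<omega>)) \<partial>M)
        = (\<integral>\<omega>. cosh (mu * norm (T \<omega>)) \<partial>M)" by (simp add: T_def)
    also have "\<dots> \<le> a1 * fac ^ m" by (rule IH)
    also have "\<dots> \<le> a1 * fac ^ Suc m" using fac1 a10
      by (intro mult_left_mono power_increasing) auto
    finally show ?thesis unfolding a1_def fac_def .
  next
    case True
    define i0 where "i0 = j + m * k"
    have i0: "1 \<le> i0" using j by (simp add: i0_def)
    have i0k: "i0 + k = j + Suc m * k" by (simp add: i0_def)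
    have Qs: "{q. q < Suc (Suc m) \<and> j + q * k \<le> n} = insert (Suc m) Qm" "Suc m \<notin> Qm"
      unfolding Qm_def using True less_Suc_eq by auto
    have finQ: "finite Qm" unfolding Qm_def by simp
    have sumeq: "(\<Sum>q\<in>{q. q < Suc (Suc m) \<and> j + q * k \<le> n}. X (j + q * k) \<omega>) = T \<omega> + X (i0 + k) \<omega>" for \<omega>
      unfolding Qs(1) T_def using finQ Qs(2) i0k by (simp add: add.commute add.left_commute)
    have TF: "T \<in> borel_measurable (nat_filt M X i0)"
      unfolding T_def
    proof (rule borel_measurable_sum)
      fix q assume "q \<in> Qm"
      hence "q \<le> m" by (simp add: Qm_def)
      hence "j + q * k \<le> i0" unfolding i0_def by simp
      thus "X (j + q * k) \<in> borel_measurable (nat_filt M X i0)"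
        by (intro X_meas_filt) (use j in auto)
    qed
    have TK: "norm (T \<omega>) \<le> real (card Qm) * c" if w: "\<omega> \<in> space M" for \<omega>
    proof -
      have "norm (T \<omega>) \<le> (\<Sum>q\<in>Qm. norm (X (j + q * k) \<omega>))" unfolding T_def by (rule norm_sum)
      also have "\<dots> \<le> real (card Qm) * c"
        by (rule sum_bounded_above) (use X_bdd j w in auto)
      finally show ?thesis .
    qed
    have ik: "1 \<le> i0 + k" using i0 by simp
    have "(\<integral>\<omega>. cosh (mu * norm (T \<omega> + X (i0 + k) \<omega>)) \<partial>M)
        \<le> (1 + (A\<^sub>1\<^sup>2 + A\<^sub>2) / c\<^sup>2 * (\<sigma>2 + C\<^sub>2 * Phr) * pi_fun (mu * c) + mu * A\<^sub>1 * (C\<^sub>1 * Phr))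
           * (\<integral>\<omega>. cosh (mu * norm (T \<omega>)) \<partial>M)"
    proof (rule key_step[OF M subalg_nat_filt TF TK X_meas[OF ik] X_bdd[OF ik] c_pos A1 A1_ge A2 mu])
      show "0 \<le> \<sigma>2 + C\<^sub>2 * Phr"
        using sig0 Phr_nonneg C2_nonneg by simp
      show "0 \<le> C\<^sub>1 * Phr" using C1_nonneg Phr_nonneg by simp
      show "\<And>G Bd. G \<in> borel_measurable (nat_filt M X i0) \<Longrightarrow> (\<And>\<omega>. \<omega> \<in> space M \<Longrightarrow> 0 \<le> G \<omega>)
        \<Longrightarrow> (\<And>\<omega>. \<omega> \<in> space M \<Longrightarrow> G \<omega> \<le> Bd)
        \<Longrightarrow> (\<integral>\<omega>. G \<omega> * (norm (X (i0 + k) \<omega>))\<^sup>2 \<partial>M) \<le> (\<sigma>2 + C\<^sub>2 * Phr) * (\<integral>\<omega>. G \<omega> \<partial>M)"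
        by (rule H2[OF i0])
      show "\<And>G Bd s. G \<in> borel_measurable (nat_filt M X i0) \<Longrightarrow> (\<And>\<omega>. \<omega> \<in> space M \<Longrightarrow> 0 \<le> G \<omega>)
        \<Longrightarrow> (\<And>\<omega>. \<omega> \<in> space M \<Longrightarrow> G \<omega> \<le> Bd)
        \<Longrightarrow> (\<integral>\<omega>. G \<omega> * blinfun_apply s (X (i0 + k) \<omega>) \<partial>M) \<le> (C\<^sub>1 * Phr) * norm s * (\<integral>\<omega>. G \<omega> \<partial>M)"
        by (rule H1[OF i0])
    qed
    hence "(\<integral>\<omega>. cosh (mu * norm (\<Sum>q\<in>{q. q < Suc (Suc m) \<and> j + q * k \<le> n}. X (j + q * k) \<omega>)) \<partial>M)
        \<le> fac * (\<integral>\<omega>. cosh (mu * norm (T \<omega>)) \<partial>M)" unfolding sumeq fac_def .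
    also have "\<dots> \<le> fac * (a1 * fac ^ m)" using IH fac1 by (intro mult_left_mono) auto
    also have "\<dots> = a1 * fac ^ Suc m" by simp
    finally show ?thesis unfolding a1_def fac_def .
  qed
qed

end

theorem lemmaA2:
  fixes M :: "'a measure"
    and X :: "nat \<Rightarrow> 'a \<Rightarrow> 'b::{banach, second_countable_topology}"
    and C :: "('b \<Rightarrow> real) set" and Cn :: "('b \<Rightarrow> real) \<Rightarrow> real"
    and c \<sigma>2 A\<^sub>1 A\<^sub>2 C\<^sub>1 C\<^sub>2 lam :: real
    and n l k r :: nat
  assumes M: "prob_space M"
    and X_meas: "\<And>i. 1 \<le> i \<Longrightarrow> X i \<in> borel_measurable M"
    and X_centered: "\<And>i. 1 \<le> i \<Longrightarrow> integral\<^sup>L M (X i) = 0"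
    and C: "C_class c C Cn"
    \<comment> \<open>Assumption A1\<close>
    and A1_ge: "1 \<le> A\<^sub>1" and A2_pos: "0 < A\<^sub>2"
    and A1: "\<And>(x::'b) v. x \<noteq> 0 \<Longrightarrow>
        (\<exists>D. (gateaux_line norm x v has_real_derivative D) (at 0) \<and> \<bar>D\<bar> \<le> A\<^sub>1 * norm v)
      \<and> (\<exists>D2. ((\<lambda>t. deriv (gateaux_line norm x v) t) has_real_derivative D2) (at 0)
              \<and> \<bar>D2\<bar> \<le> A\<^sub>2 * (norm v)\<^sup>2 / norm x)"
    \<comment> \<open>Assumption A2\<close>
    and c_pos: "0 < c" and sigma_pos: "0 < \<sigma>2"
    and X_bdd: "\<And>i \<omega>. 1 \<le> i \<Longrightarrow> \<omega> \<in> space M \<Longrightarrow> norm (X i \<omega>) \<le> c"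
    and X_var: "\<And>i. 1 \<le> i \<Longrightarrow> (\<integral>\<omega>. (norm (X i \<omega>))\<^sup>2 \<partial>M) \<le> \<sigma>2"
    \<comment> \<open>Assumption A3\<close>
    and C1_nonneg: "0 \<le> C\<^sub>1" and C2_nonneg: "0 \<le> C\<^sub>2"
    and h1_in: "\<And>s :: 'b \<Rightarrow>\<^sub>L real. restrX c (blinfun_apply s) \<in> C"
    and h1_bd: "\<And>s :: 'b \<Rightarrow>\<^sub>L real. norm s \<le> 1 \<Longrightarrow> Cn (restrX c (blinfun_apply s)) \<le> C\<^sub>1"
    and h2_in: "restrX c (\<lambda>x. (norm x)\<^sup>2) \<in> C"
    and h2_bd: "Cn (restrX c (\<lambda>x. (norm x)\<^sup>2)) \<le> C\<^sub>2"
    \<comment> \<open>finiteness of the mixing coefficient (otherwise the right-hand side is infinite)\<close>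
    and Phi_fin: "C_mixing_coeff M X C Cn k < \<infinity>"
    \<comment> \<open>block decomposition\<close>
    and n_eq: "n = l * k + r" and l_gt: "1 < l" and k_gt: "1 < k" and r_lt: "r < k"
    and lam: "0 \<le> lam"
  shows "(\<integral>\<omega>. exp (lam * norm ((1 / real n) *\<^sub>R (\<Sum>i=1..n. X i \<omega>))) \<partial>M)
     \<le> 2 * exp ((A\<^sub>1\<^sup>2 + A\<^sub>2) / c\<^sup>2
                 * ((real l + 1) * \<sigma>2 + C\<^sub>2 * real l * real_of_ereal (C_mixing_coeff M X C Cn k))
                 * pi_fun (lam * c / real l)
               + lam * (C\<^sub>1 * A\<^sub>1) * real_of_ereal (C_mixing_coeff M X C Cn k))"
proof -
  interpret S: setting M X C Cn c \<sigma>2 "C\<^sub>1" "C\<^sub>2" k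
    by (rule setting.intro[OF M X_meas X_centered C c_pos X_bdd X_var C1_nonneg C2_nonneg h1_in h1_bd h2_in h2_bd Phi_fin])
  interpret prob_space M by (rule M)
  have A2: "0 \<le> A\<^sub>2" using A2_pos by simp
  have lpos: "0 < real l" using l_gt by simp
  have kpos: "0 < real k" using k_gt by simp
  have k1: "1 \<le> k" using k_gt by simp
  have lkn: "l * k \<le> n" using n_eq by simp
  have "0 < l * k" using l_gt k_gt by simp
  hence "0 < n" using n_eq by linarith
  hence npos: "0 < real n" by simp
  have kn: "k \<le> n" using n_eq l_gt by (metis le_add1 mult_le_mono1 mult_1 less_imp_le order.trans one_le_mult_iff less_one not_le)
  define mu where "mu = lam / real l"
  have mu: "0 \<le> mu" using lam lpos by (simp add: mu_def)
  define Phr where "Phr = real_of_ereal (C_mixing_coeff M X C Cn k)"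
  have PhrS: "S.Phr = Phr" by (simp add: S.Phr_def Phr_def)
  define fac where "fac = 1 + (A\<^sub>1\<^sup>2 + A\<^sub>2) / c\<^sup>2 * (\<sigma>2 + C\<^sub>2 * Phr) * pi_fun (mu * c) + mu * A\<^sub>1 * (C\<^sub>1 * Phr)"
  define a1 where "a1 = 1 + (A\<^sub>1\<^sup>2 + A\<^sub>2) / c\<^sup>2 * \<sigma>2 * pi_fun (mu * c)"
  define E where "E = (A\<^sub>1\<^sup>2 + A\<^sub>2) / c\<^sup>2
                 * ((real l + 1) * \<sigma>2 + C\<^sub>2 * real l * Phr)
                 * pi_fun (lam * c / real l)
               + lam * (C\<^sub>1 * A\<^sub>1) * Phr"
  define P where "P = (\<lambda>j \<omega>. \<Sum>q\<in>{q. q < Suc l \<and> j + q * k \<le> n}. X (j + q * k) \<omega>)"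
  have Phr0: "0 \<le> Phr" using S.Phr_nonneg PhrS by simp
  have fac1: "1 \<le> fac" unfolding fac_def using A2 pi_fun_nonneg[of "mu * c"] Phr0 C2_nonneg C1_nonneg mu A1_ge S.sig0
    by (intro add_increasing2 add_increasing mult_nonneg_nonneg divide_nonneg_nonneg) auto
  have a10: "1 \<le> a1" unfolding a1_def using A2 pi_fun_nonneg[of "mu * c"] S.sig0
    by (intro add_increasing2 mult_nonneg_nonneg divide_nonneg_nonneg) auto
  have blk: "(\<integral>\<omega>. cosh (mu * norm (P j \<omega>)) \<partial>M) \<le> a1 * fac ^ l" if j: "j \<in> {1..k}" for j
    using S.block_bound[OF A1 A1_ge A2 mu, of j n l] j kn unfolding P_def a1_def fac_def PhrS by simp
  have expb: "a1 * fac ^ l \<le> exp E"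
  proof -
    have "a1 \<le> exp (a1 - 1)" using exp_ge_add_one_self[of "a1 - 1"] by simp
    moreover have "fac ^ l \<le> exp (fac - 1) ^ l"
      using exp_ge_add_one_self[of "fac - 1"] fac1 by (intro power_mono) auto
    ultimately have "a1 * fac ^ l \<le> exp (a1 - 1) * exp (fac - 1) ^ l"
      using a10 fac1 by (intro mult_mono) auto
    also have "\<dots> = exp (a1 - 1 + real l * (fac - 1))"
      by (simp add: exp_add exp_of_nat_mult)
    also have "a1 - 1 + real l * (fac - 1) = E"
    proof -
      have lm: "real l * mu = lam" using lpos by (simp add: mu_def)
      have pe: "mu * c = lam * c / real l" by (simp add: mu_def)
      show ?thesis unfolding a1_def fac_def E_def pe[symmetric]
        by (simp add: algebra_simps add_divide_distrib lm[symmetric])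
    qed
    finally show ?thesis .
  qed
  have Pm: "P j \<in> borel_measurable M" if "1 \<le> j" for j
    unfolding P_def by (intro borel_measurable_sum X_meas) (use that in simp)
  have pw: "exp (lam * norm ((1 / real n) *\<^sub>R (\<Sum>i=1..n. X i \<omega>)))
      \<le> (\<Sum>j\<in>{1..k}. (1 / real k) * (2 * cosh (mu * norm (P j \<omega>))))" if w: "\<omega> \<in> space M" for \<omega>
  proof -
    have dec: "(\<Sum>i=1..n. X i \<omega>) = (\<Sum>j\<in>{1..k}. P j \<omega>)"
      unfolding P_def by (rule decomp_sum[OF k1 n_eq r_lt])
    have "lam * norm ((1 / real n) *\<^sub>R (\<Sum>i=1..n. X i \<omega>)) = lam / real n * norm (\<Sum>j\<in>{1..k}. P j \<omega>)"
      unfolding dec using npos by simp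
    also have "\<dots> \<le> lam / real n * (\<Sum>j\<in>{1..k}. norm (P j \<omega>))"
      using lam npos by (intro mult_left_mono norm_sum) auto
    also have "\<dots> = (\<Sum>j\<in>{1..k}. (1 / real (card {1..k})) * (lam * real k / real n * norm (P j \<omega>)))"
      using kpos by (simp add: sum_distrib_left)
    finally have le1: "lam * norm ((1 / real n) *\<^sub>R (\<Sum>i=1..n. X i \<omega>))
        \<le> (\<Sum>j\<in>{1..k}. (1 / real (card {1..k})) * (lam * real k / real n * norm (P j \<omega>)))" .
    have "exp (lam * norm ((1 / real n) *\<^sub>R (\<Sum>i=1..n. X i \<omega>)))
        \<le> exp (\<Sum>j\<in>{1..k}. (1 / real (card {1..k})) * (lam * real k / real n * norm (P j \<omega>)))"
      using le1 by simp
    also have "\<dots> \<le> (\<Sum>j\<in>{1..k}. (1 / real (card {1..k})) * exp (lam * real k / real n * norm (P j \<omega>)))"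
      by (rule exp_avg_le) (use k1 in auto)
    also have "\<dots> \<le> (\<Sum>j\<in>{1..k}. (1 / real k) * (2 * cosh (mu * norm (P j \<omega>))))"
    proof (rule sum_mono)
      fix j assume "j \<in> {1..k}"
      have c1: "lam * real k / real n \<le> mu"
      proof -
        have "real l * real k \<le> real n" using lkn by (metis of_nat_le_iff of_nat_mult)
        hence "lam * (real l * real k) \<le> lam * real n" using lam by (intro mult_left_mono) auto
        thus ?thesis unfolding mu_def using npos lpos by (simp add: field_simps)
      qed
      have "exp (lam * real k / real n * norm (P j \<omega>)) \<le> exp (mu * norm (P j \<omega>))"
        using mult_right_mono[OF c1 norm_ge_zero[of "P j \<omega>"]] by (simp only: exp_le_cancel_iff)
      also have "\<dots> \<le> 2 * cosh (mu * norm (P j \<omega>))" by (simp add: cosh_def)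
      finally show "(1 / real (card {1..k})) * exp (lam * real k / real n * norm (P j \<omega>))
          \<le> (1 / real k) * (2 * cosh (mu * norm (P j \<omega>)))"
        using kpos by (simp add: divide_right_mono)
    qed
    finally show ?thesis .
  qed
  have icosh: "integrable M (\<lambda>\<omega>. cosh (mu * norm (P j \<omega>)))" if j1: "1 \<le> j" for j
  proof (rule integrable_const_bound[where B="cosh (mu * (real (card {q. q < Suc l \<and> j + q * k \<le> n}) * c))"])
    show "AE \<omega> in M. norm (cosh (mu * norm (P j \<omega>))) \<le> cosh (mu * (real (card {q. q < Suc l \<and> j + q * k \<le> n}) * c))"
    proof (rule AE_I2)
      fix \<omega> assume w: "\<omega> \<in> space M"
      have "norm (P j \<omega>) \<le> (\<Sum>q\<in>{q. q < Suc l \<and> j + q * k \<le> n}. norm (X (j + q * k) \<omega>))"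
        unfolding P_def by (rule norm_sum)
      also have "\<dots> \<le> real (card {q. q < Suc l \<and> j + q * k \<le> n}) * c"
        by (rule sum_bounded_above) (use X_bdd w j1 in auto)
      finally have "norm (P j \<omega>) \<le> real (card {q. q < Suc l \<and> j + q * k \<le> n}) * c" .
      thus "norm (cosh (mu * norm (P j \<omega>))) \<le> cosh (mu * (real (card {q. q < Suc l \<and> j + q * k \<le> n}) * c))"
        using mu by (simp, intro cosh_mono_nonneg mult_left_mono) auto
    qed
    have [measurable]: "P j \<in> borel_measurable M" by (rule Pm[OF j1])
    show "(\<lambda>\<omega>. cosh (mu * norm (P j \<omega>))) \<in> borel_measurable M" by measurable
  qed
  have "(\<integral>\<omega>. exp (lam * norm ((1 / real n) *\<^sub>R (\<Sum>i=1..n. X i \<omega>))) \<partial>M)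
      \<le> (\<integral>\<omega>. (\<Sum>j\<in>{1..k}. (1 / real k) * (2 * cosh (mu * norm (P j \<omega>)))) \<partial>M)"
  proof (rule integral_mono')
    show "integrable M (\<lambda>\<omega>. \<Sum>j\<in>{1..k}. (1 / real k) * (2 * cosh (mu * norm (P j \<omega>))))"
      using icosh by auto
    show "\<And>\<omega>. \<omega> \<in> space M \<Longrightarrow> 0 \<le> (\<Sum>j\<in>{1..k}. (1 / real k) * (2 * cosh (mu * norm (P j \<omega>))))"
      by (intro sum_nonneg) simp
  qed (rule pw)
  also have "\<dots> = (\<Sum>j\<in>{1..k}. (1 / real k) * (2 * (\<integral>\<omega>. cosh (mu * norm (P j \<omega>)) \<partial>M)))"
    using icosh by (simp add: Bochner_Integration.integral_sum)
  also have "\<dots> \<le> (\<Sum>j\<in>{1..k}. (1 / real k) * (2 * exp E))"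
    using blk expb kpos by (intro sum_mono mult_left_mono) fastforce+
  also have "\<dots> = 2 * exp E" using kpos by simp
  finally show ?thesis unfolding E_def Phr_def .
qed

end
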